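(* Let $n\ge 1$. For every partition $\pi=\{B_1,B_2,\ldots,B_k\}$ of $[n]$ (blocks listed in increasing order of their minimal elements) that is atomic and splitable, define $\varphi(\pi)$ as follows: (1) let $i$ be the smallest element of $B_1$ with $i\ge 2$ such that $\pi=\pi_{[i-1]}\circ(\pi_{[i,n]}-i+1)$ (such an $i$ exists because $\pi$ is splitable); (2) let $j$ be the smallest element of the underlying set of the partition $R(\pi_{[i,n]})$; (3) set $\varphi(\pi)=\pi_{[j-1]}\,\big|\,(\pi_{[j,n]}-j+1)$. Then $\varphi$ is a bijection from the set $\mathcal{A}_n\setminus\mathcal{US}_n$ of atomic, splitable partitions of $[n]$ onto the set $\mathcal{US}_n\setminus\mathcal{A}_n$ of unsplitable, non-atomic partitions of $[n]$.
   Context: $[n]=\{1,\ldots,n\}$ and $[a,b]=\{a,a+1,\ldots,b\}$. A partition of a totally ordered finite set $X$ is a family of disjoint nonempty subsets (blocks) with union $X$; blocks are listed in increasing order of their minimal elements. For $S\subseteq X$, the restriction $\pi_S$ is the partition of $S$ obtained from $\pi$ by deleting all elements not in $S$ (two elements of $S$ are in the same block of $\pi_S$ iff they are in the same block of $\pi$). For a partition $\tau$ of a set of integers and an integer $c$, $\tau-c$ (resp. $\tau+c$) denotes the partition obtained by subtracting (resp. adding) $c$ to every element of every block; thus $\pi_{[i,n]}-i+1$ is a partition of $[n-i+1]$. For $\pi=\{B_1,\ldots,B_k\}$ a partition of $[m]$ and $\sigma=\{C_1,\ldots,C_l\}$ a partition of $[n']$ (blocks in standard order), the slash product is $\pi|\sigma=\{B_1,\ldots,B_k,C_1+m,\ldots,C_l+m\}$,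 a partition of $[m+n']$. A partition is atomic if it is not of the form $\sigma|\tau$ with $\sigma,\tau$ nonempty partitions. The split product is $\pi\circ\sigma=\{B_1\cup(C_1+m),\ldots,B_k\cup(C_k+m),C_{k+1}+m,\ldots,C_l+m\}$ if $k\le l$, and $\{B_1\cup(C_1+m),\ldots,B_l\cup(C_l+m),B_{l+1},\ldots,B_k\}$ if $k>l$. A partition is splitable if it equals $\sigma\circ\tau$ for nonempty partitions $\sigma,\tau$, and unsplitable otherwise. $\mathcal{A}_n$ denotes the set of atomic partitions of $[n]$ and $\mathcal{US}_n$ the set of unsplitable partitions of $[n]$. For a partition $\pi=\{B_1,\ldots,B_k\}$ of $X=\{x_1<x_2<\cdots<x_N\}$, let $r$ be the largest index such that $B_r\cup B_{r+1}\cup\cdots\cup B_k=\{x_t,x_{t+1},\ldots,x_N\}$ for some $t$; then $R(\pi)=\{B_r,B_{r+1},\ldots,B_k\}$. *)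

theory Defs
  imports Main "HOL-Library.Disjoint_Sets"
begin

text \<open>Set partitions are represented as sets of blocks (type nat set set).
  A partition of [m] is a P with partition_on {1..m} P.\<close>

definition shift_up :: "nat \<Rightarrow> nat set set \<Rightarrow> nat set set" where
  "shift_up c P = (\<lambda>B. (\<lambda>x. x + c) ` B) ` P"

definition shift_down :: "nat \<Rightarrow> nat set set \<Rightarrow> nat set set" where
  "shift_down c P = (\<lambda>B. (\<lambda>x. x - c) ` B) ` P"

definition restr :: "nat set set \<Rightarrow> nat set \<Rightarrow> nat set set" where
  "restr P S = {B \<inter> S | B. B \<in> P \<and> B \<inter> S \<noteq> {}}"

definition blocks :: "nat set set \<Rightarrow> nat set list" where
  "blocks P = map (\<lambda>m. THE B. B \<in> P \<and> Min B = m) (sorted_list_of_set (Min ` P))"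

definition slash :: "nat \<Rightarrow> nat set set \<Rightarrow> nat set set \<Rightarrow> nat set set" where
  "slash m P Q = P \<union> shift_up m Q"

definition split_prod :: "nat \<Rightarrow> nat set set \<Rightarrow> nat set set \<Rightarrow> nat set set" where
  "split_prod m P Q =
    (let bs = blocks P; cs = blocks (shift_up m Q); k = length bs; l = length cs in
     {(if t < k then bs ! t else {}) \<union> (if t < l then cs ! t else {}) | t. t < max k l})"

definition atomic :: "nat \<Rightarrow> nat set set \<Rightarrow> bool" where
  "atomic n P \<longleftrightarrow> partition_on {1..n} P \<and>
     \<not> (\<exists>a b S T. a \<ge> 1 \<and> b \<ge> 1 \<and> partition_on {1..a} S \<and> partition_on {1..b} T
            \<and> P = slash a S T)"

definition splitable :: "nat \<Rightarrow> nat set set \<Rightarrow> bool" where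
  "splitable n P \<longleftrightarrow> partition_on {1..n} P \<and>
     (\<exists>a b S T. a \<ge> 1 \<and> b \<ge> 1 \<and> partition_on {1..a} S \<and> partition_on {1..b} T
            \<and> P = split_prod a S T)"

definition A_set :: "nat \<Rightarrow> nat set set set" where
  "A_set n = {P. partition_on {1..n} P \<and> atomic n P}"

definition US_set :: "nat \<Rightarrow> nat set set set" where
  "US_set n = {P. partition_on {1..n} P \<and> \<not> splitable n P}"

text \<open>R(pi): with blocks B_1..B_k (0-indexed here as bs!0..bs!(k-1)), take the
  largest index r such that B_r \<union> ... \<union> B_k is a final segment of the ground set.\<close>
definition R_part :: "nat set set \<Rightarrow> nat set set" where
  "R_part P = (let bs = blocks P; X = \<Union>P;
     r = (GREATEST r. r < length bs \<and>
            (\<exists>t\<in>X. \<Union>(set (drop r bs)) = {x \<in> X. t \<le> x}))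
   in set (drop r bs))"

definition phi :: "nat \<Rightarrow> nat set set \<Rightarrow> nat set set" where
  "phi n P = (let
      i = (LEAST i. i \<in> hd (blocks P) \<and> 2 \<le> i \<and>
             P = split_prod (i - 1) (restr P {1..i-1}) (shift_down (i - 1) (restr P {i..n})));
      j = Min (\<Union>(R_part (restr P {i..n})))
    in slash (j - 1) (restr P {1..j-1}) (shift_down (j - 1) (restr P {j..n})))"

end

theory Submission
  imports Defs
begin


definition rgf :: "nat set \<Rightarrow> (nat \<Rightarrow> nat) \<Rightarrow> bool" where
  "rgf X h \<longleftrightarrow> (\<forall>x\<in>X. \<forall>v<h x. \<exists>y\<in>X. y < x \<and> h y = v)"

definition part :: "nat set \<Rightarrow> (nat \<Rightarrow> nat) \<Rightarrow> nat set set" where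
  "part X h = (\<lambda>x. {y\<in>X. h y = h x}) ` X"

lemma partition_part: "partition_on X (part X h)"
  unfolding part_def partition_on_def disjoint_def by auto

lemma part_eq_iff:
  "part X h = part X h' \<longleftrightarrow> (\<forall>x\<in>X. \<forall>y\<in>X. h x = h y \<longleftrightarrow> h' x = h' y)"
proof
  assume eq: "part X h = part X h'"
  have key: "{y\<in>X. h y = h x} = {y\<in>X. h' y = h' x}" if "x \<in> X" for x
  proof -
    have "{y\<in>X. h y = h x} \<in> part X h'" using eq that unfolding part_def by auto
    then obtain z where z: "z \<in> X" "{y\<in>X. h y = h x} = {y\<in>X. h' y = h' z}"
      unfolding part_def by auto
    have "x \<in> {y\<in>X. h y = h x}" using that by auto
    hence "h' x = h' z" using z by auto
    thus ?thesis using z by auto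
  qed
  show "\<forall>x\<in>X. \<forall>y\<in>X. h x = h y \<longleftrightarrow> h' x = h' y"
  proof (intro ballI)
    fix x y assume "x \<in> X" "y \<in> X"
    have "y \<in> {z\<in>X. h z = h x} \<longleftrightarrow> y \<in> {z\<in>X. h' z = h' x}" using key[of x] \<open>x \<in> X\<close> by simp
    thus "h x = h y \<longleftrightarrow> h' x = h' y" using \<open>y \<in> X\<close> by auto
  qed
next
  assume "\<forall>x\<in>X. \<forall>y\<in>X. h x = h y \<longleftrightarrow> h' x = h' y"
  hence "\<And>x. x \<in> X \<Longrightarrow> {y\<in>X. h y = h x} = {y\<in>X. h' y = h' x}" by blast
  thus "part X h = part X h'" unfolding part_def by (auto intro!: image_cong)
qed

lemma part_cong: "(\<And>x y. x \<in> X \<Longrightarrow> y \<in> X \<Longrightarrow> h x = h y \<longleftrightarrow> h' x = h' y) \<Longrightarrow> part X h = part X h'"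
  using part_eq_iff by blast

lemma rgf_unique:
  assumes "rgf X h" "rgf X h'" "\<And>x y. x \<in> X \<Longrightarrow> y \<in> X \<Longrightarrow> h x = h y \<longleftrightarrow> h' x = h' y"
  shows "x \<in> X \<Longrightarrow> h x = h' x"
proof (induction x rule: less_induct)
  case (less x)
  show ?case
  proof (rule ccontr)
    assume ne: "h x \<noteq> h' x"
    show False
    proof (cases "h x < h' x")
      case True
      then obtain y where y: "y \<in> X" "y < x" "h' y = h x" using assms(2) less.prems unfolding rgf_def by blast
      have "h y = h' y" using less.IH y by auto
      hence "h y = h x" using y by simp
      hence "h' y = h' x" using assms(3) y less.prems by blast
      thus False using y True by simp
    next
      case False
      hence "h' x < h x" using ne by simp
      then obtain y where y: "y \<in> X" "y < x" "h y = h' x" using assms(1) less.prems unfolding rgf_def by blast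
      have "h y = h' y" using less.IH y by auto
      hence "h' y = h' x" using y by simp
      hence "h y = h x" using assms(3) y less.prems by blast
      thus False using y \<open>h' x < h x\<close> by simp
    qed
  qed
qed

lemma down_closed_eq:
  fixes S :: "nat set"
  assumes "finite S" "\<And>s v. s \<in> S \<Longrightarrow> v < s \<Longrightarrow> v \<in> S"
  shows "S = {..<card S}"
proof -
  have sub: "S \<subseteq> {..<card S}"
  proof
    fix s assume "s \<in> S"
    hence "{..s} \<subseteq> S" using assms(2) by (auto simp: le_less)
    hence "card {..s} \<le> card S" using assms(1) card_mono by blast
    thus "s \<in> {..<card S}" by simp
  qed
  show ?thesis using card_subset_eq[OF _ sub] by simp
qed

lemma rgf_image:
  assumes "finite X" "rgf X h"
  shows "h ` X = {..<card (h ` X)}"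
  apply (rule down_closed_eq)
  using assms unfolding rgf_def by auto

lemma rgf_image_lt:
  assumes "finite X" "rgf X h" "x \<in> X"
  shows "h x < card (h ` X)"
  using rgf_image[OF assms(1,2)] assms(3) by blast

lemma rank_exists:
  fixes M :: "nat set"
  assumes "finite M" "v < card M"
  shows "\<exists>e\<in>M. card {z\<in>M. z < e} = v"
  using assms
proof (induction M arbitrary: v rule: finite_linorder_max_induct)
  case empty
  then show ?case by simp
next
  case (insert b A)
  have cA: "card (insert b A) = Suc (card A)" using insert by auto
  show ?case
  proof (cases "v < card A")
    case True
    then obtain e where e: "e \<in> A" "card {z\<in>A. z < e} = v" using insert by blast
    have "{z\<in>insert b A. z < e} = {z\<in>A. z < e}" using insert e by auto
    hence "card {z\<in>insert b A. z < e} = v" using e by simp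
    thus ?thesis using e(1) by blast
  next
    case False
    hence "v = card A" using insert cA by simp
    moreover have "{z\<in>insert b A. z < b} = A" using insert by auto
    ultimately have "card {z\<in>insert b A. z < b} = v" by simp
    thus ?thesis by blast
  qed
qed

lemma part_exists:
  assumes "finite X" "partition_on X P"
  shows "\<exists>h. rgf X h \<and> P = part X h"
proof -
  have uniq: "\<exists>!B. B \<in> P \<and> x \<in> B" if xX: "x \<in> X" for x
  proof -
    obtain B where "B \<in> P" "x \<in> B" using assms(2) xX unfolding partition_on_def by blast
    moreover have "B' = B" if "B' \<in> P" "x \<in> B'" for B'
      using assms(2) that \<open>B \<in> P\<close> \<open>x \<in> B\<close> unfolding partition_on_def disjoint_def by blast
    ultimately show ?thesis by blast
  qed
  define bl where "bl x = (THE B. B \<in> P \<and> x \<in> B)" for x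
  have bl1: "bl x \<in> P \<and> x \<in> bl x" if "x \<in> X" for x
  proof -
    have "\<exists>!B. B \<in> P \<and> x \<in> B" using uniq that by blast
    thus ?thesis unfolding bl_def by (rule theI')
  qed
  have bl2: "bl x = B" if "B \<in> P" "x \<in> B" for x B
  proof -
    have "x \<in> X" using assms(2) that unfolding partition_on_def by auto
    hence "\<exists>!B. B \<in> P \<and> x \<in> B" using uniq by blast
    thus ?thesis unfolding bl_def using that by (metis (mono_tags, lifting) the1_equality)
  qed
  have finB: "finite B" if "B \<in> P" for B
    using assms that unfolding partition_on_def by (meson Union_upper rev_finite_subset)
  have neB: "B \<noteq> {}" if "B \<in> P" for B using assms that unfolding partition_on_def by auto
  have subB: "B \<subseteq> X" if "B \<in> P" for B using assms that unfolding partition_on_def by auto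
  have MinB: "Min B \<in> B" if "B \<in> P" for B using finB[OF that] neB[OF that] by simp
  have finP: "finite P" using assms unfolding partition_on_def by (metis finite_UnionD)
  define M where "M = Min ` P"
  have finM: "finite M" using finP unfolding M_def by simp
  define h where "h x = card {m\<in>M. m < Min (bl x)}" for x
  have Mininj: "Min B1 \<noteq> Min B2" if "B1 \<in> P" "B2 \<in> P" "B1 \<noteq> B2" for B1 B2
  proof
    assume "Min B1 = Min B2"
    hence "Min B1 \<in> B1 \<inter> B2" using MinB[OF that(1)] MinB[OF that(2)] by simp
    moreover have "B1 \<inter> B2 = {}" using assms(2) that unfolding partition_on_def disjoint_def by auto
    ultimately show False by simp
  qed
  have mono: "h x < h y" if "x \<in> X" "y \<in> X" "Min (bl x) < Min (bl y)" for x y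
  proof -
    have "{m\<in>M. m < Min (bl x)} \<subset> {m\<in>M. m < Min (bl y)}"
      using that bl1[OF that(1)] unfolding M_def by auto
    thus ?thesis unfolding h_def using finM by (simp add: psubset_card_mono)
  qed
  have ker: "h x = h y \<longleftrightarrow> bl x = bl y" if "x \<in> X" "y \<in> X" for x y
  proof
    assume hxy: "h x = h y"
    show "bl x = bl y"
    proof (rule ccontr)
      assume "bl x \<noteq> bl y"
      hence "Min (bl x) \<noteq> Min (bl y)" using Mininj bl1 that by blast
      hence "Min (bl x) < Min (bl y) \<or> Min (bl y) < Min (bl x)" by arith
      thus False using mono[OF that] mono[OF that(2,1)] hxy by auto
    qed
  qed (simp add: h_def)
  have Peq: "P = part X h"
  proof -
    have "{y\<in>X. h y = h x} = bl x" if "x \<in> X" for x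
    proof
      show "{y\<in>X. h y = h x} \<subseteq> bl x" using ker that bl1 by auto
      show "bl x \<subseteq> {y\<in>X. h y = h x}"
      proof
        fix y assume "y \<in> bl x"
        hence "bl y = bl x" using bl2 bl1[OF that] by blast
        moreover have "y \<in> X" using \<open>y \<in> bl x\<close> subB bl1[OF that] by blast
        ultimately show "y \<in> {y\<in>X. h y = h x}" using ker that by auto
      qed
    qed
    hence "part X h = bl ` X" unfolding part_def by auto
    also have "\<dots> = P"
    proof
      show "bl ` X \<subseteq> P" using bl1 by auto
      show "P \<subseteq> bl ` X"
      proof
        fix B assume "B \<in> P"
        hence "bl (Min B) = B" "Min B \<in> X" using bl2 MinB subB by auto blast
        thus "B \<in> bl ` X" by (metis image_eqI)
      qed
    qed
    finally show ?thesis by simp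
  qed
  have "rgf X h" unfolding rgf_def
  proof (intro ballI allI impI)
    fix x v assume x: "x \<in> X" and v: "v < h x"
    define M' where "M' = {m\<in>M. m < Min (bl x)}"
    have "finite M'" using finM unfolding M'_def by simp
    moreover have "v < card M'" using v unfolding M'_def h_def by simp
    ultimately obtain e where e: "e \<in> M'" "card {z\<in>M'. z < e} = v" using rank_exists by blast
    then obtain B where B: "B \<in> P" "e = Min B" unfolding M'_def M_def by auto
    have eX: "e \<in> X" using B MinB subB by auto
    have "bl e = B" using bl2 B MinB by auto
    hence "h e = card {m\<in>M. m < e}" unfolding h_def using B by simp
    also have "{m\<in>M. m < e} = {z\<in>M'. z < e}" using e(1) unfolding M'_def by auto
    finally have "h e = v" using e by simp
    moreover have "e < x"
    proof -
      have "e < Min (bl x)" using e(1) unfolding M'_def by auto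
      also have "Min (bl x) \<le> x" using bl1[OF x] finB by (meson Min_le)
      finally show ?thesis .
    qed
    ultimately show "\<exists>y\<in>X. y < x \<and> h y = v" using eX by blast
  qed
  thus ?thesis using Peq by blast
qed


lemma part_alt: "part X h = (\<lambda>t. {x\<in>X. h x = t}) ` (h ` X)"
  unfolding part_def by auto

lemma blocks_part:
  assumes fin: "finite X" and r: "rgf X h"
  shows "blocks (part X h) = map (\<lambda>t. {x\<in>X. h x = t}) [0..<card (h ` X)]"
proof -
  define K where "K = card (h ` X)"
  define S where "S t = {x\<in>X. h x = t}" for t
  define fo where "fo t = Min (S t)" for t
  have img: "h ` X = {..<K}" using rgf_image[OF fin r] unfolding K_def .
  have Sne: "S t \<noteq> {}" if "t < K" for t
  proof -
    have "t \<in> h ` X" using img that by simp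
    thus ?thesis unfolding S_def by auto
  qed
  have Sfin: "finite (S t)" for t using fin unfolding S_def by simp
  have foS: "fo t \<in> S t" if "t < K" for t using Sne[OF that] Sfin unfolding fo_def by simp
  have fomono: "fo s < fo t" if st: "s < t" "t < K" for s t
  proof -
    have ft: "fo t \<in> X" "h (fo t) = t" using foS[OF st(2)] unfolding S_def by auto
    have "s < h (fo t)" using ft st by simp
    then obtain y where y: "y \<in> X" "y < fo t" "h y = s" using r ft(1) unfolding rgf_def by blast
    hence "y \<in> S s" unfolding S_def by simp
    hence "fo s \<le> y" unfolding fo_def using Sfin by simp
    thus ?thesis using y by simp
  qed
  have foinj: "s = t" if "s < K" "t < K" "fo s = fo t" for s t
  proof (cases s t rule: linorder_cases)
    case less thus ?thesis using fomono[of s t] that by simp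
  next
    case greater thus ?thesis using fomono[of t s] that by simp
  qed
  have P: "part X h = S ` {..<K}" using part_alt[of X h] img unfolding S_def by simp
  have Mins: "Min ` part X h = fo ` {..<K}" unfolding P fo_def by auto
  have sw: "sorted_wrt (<) (map fo [0..<K])"
    unfolding sorted_wrt_iff_nth_less using fomono by auto
  have injfo: "inj_on fo {..<K}" using foinj unfolding inj_on_def by auto
  have sl: "sorted_list_of_set (Min ` part X h) = map fo [0..<K]"
    unfolding Mins
    apply (subst sorted_list_of_set_unique[symmetric])
    using sw injfo by (auto simp: card_image)
  have th: "(THE B. B \<in> part X h \<and> Min B = fo t) = S t" if "t < K" for t
  proof (rule the_equality)
    show "S t \<in> part X h \<and> Min (S t) = fo t" using that unfolding P fo_def by auto
    fix B assume "B \<in> part X h \<and> Min B = fo t"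
    then obtain s where "s < K" "B = S s" "fo s = fo t" unfolding P fo_def by auto
    thus "B = S t" using foinj that by auto
  qed
  show ?thesis unfolding blocks_def sl
    using th by (auto simp: S_def K_def)
qed

lemma restr_part: "restr (part X h) S = part (X \<inter> S) h"
proof
  show "restr (part X h) S \<subseteq> part (X \<inter> S) h"
  proof
    fix C assume "C \<in> restr (part X h) S"
    then obtain x where x: "x \<in> X" "C = {y\<in>X. h y = h x} \<inter> S" "C \<noteq> {}"
      unfolding restr_def part_def by blast
    then obtain z where z: "z \<in> C" by blast
    have "h z = h x" using x z by blast
    hence "C = {y\<in>X \<inter> S. h y = h z}" using x by auto
    moreover have "z \<in> X \<inter> S" using x z by blast
    ultimately show "C \<in> part (X \<inter> S) h" unfolding part_def by blast
  qed
  show "part (X \<inter> S) h \<subseteq> restr (part X h) S"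
  proof
    fix C assume "C \<in> part (X \<inter> S) h"
    then obtain x where x: "x \<in> X \<inter> S" "C = {y\<in>X \<inter> S. h y = h x}" unfolding part_def by blast
    have "C = {y\<in>X. h y = h x} \<inter> S" using x by blast
    moreover have "{y\<in>X. h y = h x} \<in> part X h" using x unfolding part_def by blast
    moreover have "{y\<in>X. h y = h x} \<inter> S \<noteq> {}" using x by blast
    ultimately show "C \<in> restr (part X h) S" unfolding restr_def by blast
  qed
qed

lemma shift_up_part: "shift_up c (part X h) = part ((\<lambda>x. x + c) ` X) (\<lambda>y. h (y - c))"
proof -
  have e: "(\<lambda>x. x + c) ` {y\<in>X. h y = h x} = {w\<in>(\<lambda>x. x + c) ` X. h (w - c) = h x}" for x
    by (auto simp: image_iff)
  have "shift_up c (part X h) = (\<lambda>x. (\<lambda>x. x + c) ` {y\<in>X. h y = h x}) ` X"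
    unfolding shift_up_def part_def by (simp add: image_image)
  also have "\<dots> = (\<lambda>x. {w\<in>(\<lambda>x. x + c) ` X. h (w - c) = h x}) ` X" using e by simp
  also have "\<dots> = part ((\<lambda>x. x + c) ` X) (\<lambda>y. h (y - c))"
    unfolding part_def by (simp add: image_image)
  finally show ?thesis .
qed

lemma shift_down_part:
  assumes "\<forall>x\<in>X. c \<le> x"
  shows "shift_down c (part X h) = part ((\<lambda>x. x - c) ` X) (\<lambda>y. h (y + c))"
proof -
  have e: "(\<lambda>x. x - c) ` {y\<in>X. h y = h x} = {w\<in>(\<lambda>x. x - c) ` X. h (w + c) = h x}" for x
  proof
    show "(\<lambda>x. x - c) ` {y\<in>X. h y = h x} \<subseteq> {w\<in>(\<lambda>x. x - c) ` X. h (w + c) = h x}"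
      using assms by auto
    show "{w\<in>(\<lambda>x. x - c) ` X. h (w + c) = h x} \<subseteq> (\<lambda>x. x - c) ` {y\<in>X. h y = h x}"
    proof
      fix w assume "w \<in> {w\<in>(\<lambda>x. x - c) ` X. h (w + c) = h x}"
      then obtain z where z: "z \<in> X" "w = z - c" "h (w + c) = h x" by auto
      hence "w + c = z" using assms by auto
      thus "w \<in> (\<lambda>x. x - c) ` {y\<in>X. h y = h x}" using z by (auto intro!: image_eqI[of _ _ z])
    qed
  qed
  have e2: "h (x - c + c) = h x" if "x \<in> X" for x using assms that by simp
  have "shift_down c (part X h) = (\<lambda>x. (\<lambda>x. x - c) ` {y\<in>X. h y = h x}) ` X"
    unfolding shift_down_def part_def by (simp add: image_image)
  also have "\<dots> = (\<lambda>x. {w\<in>(\<lambda>x. x - c) ` X. h (w + c) = h x}) ` X" using e by simp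
  also have "\<dots> = (\<lambda>x. {w\<in>(\<lambda>x. x - c) ` X. h (w + c) = h (x - c + c)}) ` X"
    using e2 by (auto intro!: image_cong)
  also have "\<dots> = part ((\<lambda>x. x - c) ` X) (\<lambda>y. h (y + c))"
    unfolding part_def by (simp add: image_image)
  finally show ?thesis .
qed

lemma part_Un:
  assumes "\<And>x y. x \<in> A \<Longrightarrow> y \<in> B \<Longrightarrow> h x \<noteq> h y"
  shows "part (A \<union> B) h = part A h \<union> part B h"
proof -
  have "{y \<in> A \<union> B. h y = h x} = {y \<in> A. h y = h x}" if "x \<in> A" for x
    using assms that by force
  moreover have "{y \<in> A \<union> B. h y = h x} = {y \<in> B. h y = h x}" if "x \<in> B" for x
    using assms that by blast
  ultimately show ?thesis unfolding part_def by (auto simp: image_Un)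
qed

lemma part_cong_fun: "(\<And>x. x \<in> X \<Longrightarrow> h x = h' x) \<Longrightarrow> part X h = part X h'"
  by (rule part_cong) auto

lemma slash_part:
  assumes "A \<subseteq> {..a}" "B \<subseteq> {1..}"
  shows "slash a (part A h1) (part B h2) =
    part (A \<union> (\<lambda>x. x + a) ` B) (\<lambda>x. if x \<le> a then 2 * h1 x else 2 * h2 (x - a) + 1)"
proof -
  define H where "H x = (if x \<le> a then 2 * h1 x else 2 * h2 (x - a) + 1)" for x
  have d: "H x \<noteq> H y" if "x \<in> A" "y \<in> (\<lambda>x. x + a) ` B" for x y
  proof -
    have "x \<le> a" "\<not> y \<le> a" using that assms by auto
    thus ?thesis unfolding H_def by presburger
  qed
  have "part (A \<union> (\<lambda>x. x + a) ` B) H = part A H \<union> part ((\<lambda>x. x + a) ` B) H"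
    using part_Un d by blast
  also have "part A H = part A h1" using assms(1) by (intro part_cong) (auto simp: H_def)
  also have "part ((\<lambda>x. x + a) ` B) H = part ((\<lambda>x. x + a) ` B) (\<lambda>y. h2 (y - a))"
    using assms(2) by (intro part_cong) (auto simp: H_def)
  finally have "part (A \<union> (\<lambda>x. x + a) ` B) H = part A h1 \<union> shift_up a (part B h2)"
    unfolding shift_up_part .
  thus ?thesis unfolding slash_def H_def by simp
qed


lemma rgf_shift:
  assumes "rgf {1..b} h2"
  shows "rgf {a+1..a+b} (\<lambda>y. h2 (y - a))"
  unfolding rgf_def
proof (intro ballI allI impI)
  fix x v assume x: "x \<in> {a+1..a+b}" and v: "v < h2 (x - a)"
  have "x - a \<in> {1..b}" using x by auto
  then obtain y where y: "y \<in> {1..b}" "y < x - a" "h2 y = v" using assms v unfolding rgf_def by blast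
  show "\<exists>y\<in>{a + 1..a + b}. y < x \<and> h2 (y - a) = v"
    using y x by (intro bexI[of _ "y + a"]) auto
qed

lemma rgf_shift_down:
  assumes "rgf {c+1..n} f"
  shows "rgf {1..n-c} (\<lambda>y. f (y + c))"
  unfolding rgf_def
proof (intro ballI allI impI)
  fix x v assume x: "x \<in> {1..n-c}" and v: "v < f (x + c)"
  have "x + c \<in> {c+1..n}" using x by auto
  then obtain y where y: "y \<in> {c+1..n}" "y < x + c" "f y = v" using assms v unfolding rgf_def by blast
  show "\<exists>y\<in>{1..n-c}. y < x \<and> f (y + c) = v"
    using y x by (intro bexI[of _ "y - c"]) auto
qed

lemma rgf_mono_hi:
  assumes "rgf {lo..hi} f" "hi' \<le> hi"
  shows "rgf {lo..hi'} f"
  using assms unfolding rgf_def by (meson atLeastAtMost_iff le_trans less_imp_le_nat)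

lemma img_shift_down: "(\<lambda>x. x - c) ` {c+1..n} = {1..n-(c::nat)}"
proof
  show "(\<lambda>x. x - c) ` {c+1..n} \<subseteq> {1..n-c}"
  proof (rule image_subsetI)
    fix x assume x: "x \<in> {c+1..n}"
    have "1 \<le> x - c" "x - c \<le> n - c" using x by auto
    thus "x - c \<in> {1..n-c}" by simp
  qed
  show "{1..n-c} \<subseteq> (\<lambda>x. x - c) ` {c+1..n}"
  proof
    fix y assume "y \<in> {1..n-c}"
    thus "y \<in> (\<lambda>x. x - c) ` {c+1..n}" by (intro image_eqI[of _ _ "y + c"]) auto
  qed
qed

lemma img_shift_up: "(\<lambda>x. x + a) ` {1..b} = {a+1..a+(b::nat)}"
proof
  show "(\<lambda>x. x + a) ` {1..b} \<subseteq> {a+1..a+b}"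
  proof (rule image_subsetI)
    fix x assume x: "x \<in> {1..b}"
    have "a + 1 \<le> x + a" "x + a \<le> a + b" using x by auto
    thus "x + a \<in> {a+1..a+b}" by simp
  qed
  show "{a+1..a+b} \<subseteq> (\<lambda>x. x + a) ` {1..b}"
  proof
    fix y assume "y \<in> {a+1..a+b}"
    thus "y \<in> (\<lambda>x. x + a) ` {1..b}" by (intro image_eqI[of _ _ "y - a"]) auto
  qed
qed

lemma img_shift_down'[simp]: "(\<lambda>x. x - c) ` {Suc c..n} = {Suc 0..n-(c::nat)}"
  using img_shift_down[of c n] by simp

lemma split_part:
  assumes r1: "rgf {1..a} h1" and r2: "rgf {1..b} h2"
  shows "split_prod a (part {1..a} h1) (part {1..b} h2) =
         part {1..a+b} (\<lambda>x. if x \<le> a then h1 x else h2 (x - a))"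
proof -
  define G where "G x = (if x \<le> a then h1 x else h2 (x - a))" for x
  define H2 where "H2 y = h2 (y - a)" for y
  define K1 where "K1 = card (h1 ` {1..a})"
  define K2 where "K2 = card (H2 ` {a+1..a+b})"
  have rH2: "rgf {a+1..a+b} H2" using rgf_shift[OF r2] unfolding H2_def .
  have su: "shift_up a (part {1..b} h2) = part {a+1..a+b} H2"
    unfolding shift_up_part img_shift_up H2_def ..
  have bs: "blocks (part {1..a} h1) = map (\<lambda>t. {x\<in>{1..a}. h1 x = t}) [0..<K1]"
    using blocks_part[OF _ r1] unfolding K1_def by simp
  have cs: "blocks (shift_up a (part {1..b} h2)) = map (\<lambda>t. {x\<in>{a+1..a+b}. H2 x = t}) [0..<K2]"
    unfolding su using blocks_part[OF _ rH2] unfolding K2_def by simp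
  have i1: "h1 ` {1..a} = {..<K1}" using rgf_image[OF _ r1] unfolding K1_def by simp
  have i2: "H2 ` {a+1..a+b} = {..<K2}" using rgf_image[OF _ rH2] unfolding K2_def by simp
  have el: "(if t < K1 then map (\<lambda>t. {x\<in>{1..a}. h1 x = t}) [0..<K1] ! t else {}) \<union>
            (if t < K2 then map (\<lambda>t. {x\<in>{a+1..a+b}. H2 x = t}) [0..<K2] ! t else {})
          = {x\<in>{1..a+b}. G x = t}" for t
  proof -
    have A: "(if t < K1 then map (\<lambda>t. {x\<in>{1..a}. h1 x = t}) [0..<K1] ! t else {}) = {x\<in>{1..a}. h1 x = t}"
    proof (cases "t < K1")
      case False
      have "h1 x \<noteq> t" if "x \<in> {1..a}" for x
        using i1 that False by (metis imageI lessThan_iff)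
      thus ?thesis using False by auto
    qed simp
    have B: "(if t < K2 then map (\<lambda>t. {x\<in>{a+1..a+b}. H2 x = t}) [0..<K2] ! t else {}) = {x\<in>{a+1..a+b}. H2 x = t}"
    proof (cases "t < K2")
      case False
      have "H2 x \<noteq> t" if "x \<in> {a+1..a+b}" for x
        using i2 that False by (metis imageI lessThan_iff)
      thus ?thesis using False by auto
    qed simp
    have C: "{x\<in>{1..a}. h1 x = t} \<union> {x\<in>{a+1..a+b}. H2 x = t} = {x\<in>{1..a+b}. G x = t}"
      unfolding G_def H2_def by auto
    show ?thesis using A B C by simp
  qed
  have Gimg: "G ` {1..a+b} = {..<max K1 K2}"
  proof -
    have U: "{1..a+b} = {1..a} \<union> {a+1..a+b}" by auto
    have "G ` {1..a+b} = G ` {1..a} \<union> G ` {a+1..a+b}" unfolding U image_Un ..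
    also have "G ` {1..a} = h1 ` {1..a}" unfolding G_def by (auto intro!: image_cong)
    also have "G ` {a+1..a+b} = H2 ` {a+1..a+b}" unfolding G_def H2_def by (auto intro!: image_cong)
    finally show ?thesis unfolding i1 i2 by (auto simp: max_def)
  qed
  have "split_prod a (part {1..a} h1) (part {1..b} h2) = {{x\<in>{1..a+b}. G x = t} | t. t < max K1 K2}"
    unfolding split_prod_def Let_def bs cs using el by simp
  also have "\<dots> = part {1..a+b} G" unfolding part_alt Gimg by auto
  finally show ?thesis unfolding G_def .
qed

lemma rgf_G:
  assumes r1: "rgf {1..a} h1" and r2: "rgf {1..b} h2"
  shows "rgf {1..a+b} (\<lambda>x. if x \<le> a then h1 x else h2 (x - a))"
  unfolding rgf_def
proof (intro ballI allI impI)
  fix x v assume x: "x \<in> {1..a+b}" and v: "v < (if x \<le> a then h1 x else h2 (x - a))"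
  show "\<exists>y\<in>{1..a+b}. y < x \<and> (if y \<le> a then h1 y else h2 (y - a)) = v"
  proof (cases "x \<le> a")
    case True
    have "\<exists>y\<in>{1..a}. y < x \<and> h1 y = v" using r1 v x True unfolding rgf_def by simp
    then obtain y where "y \<in> {1..a}" "y < x" "h1 y = v" by blast
    thus ?thesis by (intro bexI[of _ y]) auto
  next
    case False
    hence "x - a \<in> {1..b}" using x by auto
    moreover have "v < h2 (x - a)" using v False by simp
    ultimately have "\<exists>y\<in>{1..b}. y < x - a \<and> h2 y = v" using r2 unfolding rgf_def by blast
    then obtain y where "y \<in> {1..b}" "y < x - a" "h2 y = v" by blast
    thus ?thesis using False by (intro bexI[of _ "y + a"]) auto
  qed
qed

lemma Union_part: "\<Union>(part X h) = X"
  using partition_part[of X h] unfolding partition_on_def by simp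

lemma interval_eq:
  assumes "{1..n} = {1..m::nat}" shows "n = m"
proof (cases n m rule: linorder_cases)
  case less
  hence "m \<in> {1..m}" by simp
  hence "m \<in> {1..n}" using assms by simp
  thus ?thesis using less by simp
next
  case greater
  hence "n \<in> {1..n}" by simp
  hence "n \<in> {1..m}" using assms by simp
  thus ?thesis using greater by simp
qed

lemma partition_on_same: "partition_on A P \<Longrightarrow> partition_on B P \<Longrightarrow> A = B"
  unfolding partition_on_def by simp

lemma split_rgf:
  assumes r: "rgf {1..n} f" and S: "partition_on {1..a} S" and T: "partition_on {1..b} T"
    and eq: "part {1..n} f = split_prod a S T"
  shows "n = a + b \<and> rgf {a+1..n} f"
proof -
  obtain h1 where h1: "rgf {1..a} h1" "S = part {1..a} h1" using part_exists[OF _ S] by auto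
  obtain h2 where h2: "rgf {1..b} h2" "T = part {1..b} h2" using part_exists[OF _ T] by auto
  define G where "G x = (if x \<le> a then h1 x else h2 (x - a))" for x
  have eq2: "part {1..n} f = part {1..a+b} G" using eq split_part[OF h1(1) h2(1)] h1 h2 unfolding G_def by simp
  have "{1..n} = {1..a+b}" using partition_on_same[OF partition_part[of "{1..n}" f]] eq2 partition_part by metis
  hence n: "n = a + b" using interval_eq by blast
  have rG: "rgf {1..n} G" using rgf_G[OF h1(1) h2(1)] n unfolding G_def by simp
  have fG: "f x = G x" if "x \<in> {1..n}" for x
    using rgf_unique[OF r rG _ that] eq2 n part_eq_iff by blast
  have "rgf {a+1..n} f" unfolding rgf_def
  proof (intro ballI allI impI)
    fix x v assume x: "x \<in> {a+1..n}" and v: "v < f x"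
    have xa: "x - a \<in> {1..b}" using x n by auto
    have "f x = h2 (x - a)" using fG[of x] x unfolding G_def by auto
    hence "v < h2 (x - a)" using v by simp
    hence "\<exists>y\<in>{1..b}. y < x - a \<and> h2 y = v" using h2(1) xa unfolding rgf_def by blast
    then obtain y where y: "y \<in> {1..b}" "y < x - a" "h2 y = v" by blast
    have "f (y + a) = v" using fG[of "y + a"] y n unfolding G_def by auto
    thus "\<exists>y\<in>{a + 1..n}. y < x \<and> f y = v" using y n x by (intro bexI[of _ "y + a"]) auto
  qed
  thus ?thesis using n by simp
qed

lemma split_back:
  assumes r: "rgf {1..n} f" and ra: "rgf {a+1..n} f" and an: "a \<le> n"
  shows "part {1..n} f = split_prod a (restr (part {1..n} f) {1..a})
            (shift_down a (restr (part {1..n} f) {a+1..n}))"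
proof -
  have e1: "restr (part {1..n} f) {1..a} = part {1..a} f" unfolding restr_part using an
    by (simp add: Int_absorb1)
  have e2: "shift_down a (restr (part {1..n} f) {a+1..n}) = part {1..n-a} (\<lambda>y. f (y + a))"
    unfolding restr_part by (simp add: shift_down_part img_shift_down Int_absorb1)
  have r1: "rgf {1..a} f" using rgf_mono_hi[OF r an] .
  have r2: "rgf {1..n-a} (\<lambda>y. f (y + a))" using rgf_shift_down[OF ra] .
  have an': "a + (n - a) = n" using an by simp
  show ?thesis unfolding e1 e2 split_part[OF r1 r2] an'
    by (intro part_cong_fun) auto
qed

definition cutp :: "(nat \<Rightarrow> nat) \<Rightarrow> nat \<Rightarrow> nat \<Rightarrow> bool" where
  "cutp f n c \<longleftrightarrow> (\<forall>x\<in>{1..c}. \<forall>y\<in>{c+1..n}. f x \<noteq> f y)"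

lemma slash_back:
  assumes "1 \<le> c" "c \<le> n"
  shows "slash c (restr (part {1..n} f) {1..c}) (shift_down c (restr (part {1..n} f) {c+1..n}))
       = part {1..n} (\<lambda>x. if x \<le> c then 2 * f x else 2 * f x + 1)"
proof -
  have e1: "restr (part {1..n} f) {1..c} = part {1..c} f" unfolding restr_part using assms
    by (simp add: Int_absorb1)
  have e2: "shift_down c (restr (part {1..n} f) {c+1..n}) = part {1..n-c} (\<lambda>y. f (y + c))"
    unfolding restr_part by (simp add: shift_down_part img_shift_down Int_absorb1)
  have s: "{1..c} \<union> (\<lambda>x. x + c) ` {1..n-c} = {1..n}" unfolding img_shift_up using assms by auto
  show ?thesis unfolding e1 e2 using slash_part[of "{1..c}" c "{1..n-c}" f "\<lambda>y. f (y + c)"] s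
    by (auto intro!: part_cong_fun)
qed

lemma atomic_iff:
  assumes n: "1 \<le> n"
  shows "atomic n (part {1..n} f) \<longleftrightarrow> \<not> (\<exists>c. 1 \<le> c \<and> c < n \<and> cutp f n c)"
proof
  assume at: "atomic n (part {1..n} f)"
  show "\<not> (\<exists>c. 1 \<le> c \<and> c < n \<and> cutp f n c)"
  proof
    assume "\<exists>c. 1 \<le> c \<and> c < n \<and> cutp f n c"
    then obtain c where c: "1 \<le> c" "c < n" "cutp f n c" by blast
    define S where "S = restr (part {1..n} f) {1..c}"
    define T where "T = shift_down c (restr (part {1..n} f) {c+1..n})"
    have pS: "partition_on {1..c} S" unfolding S_def restr_part using c
      by (simp add: Int_absorb1 partition_part)
    have pT: "partition_on {1..n-c} T" unfolding T_def restr_part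
      by (simp add: shift_down_part img_shift_down Int_absorb1 partition_part)
    have "slash c S T = part {1..n} (\<lambda>x. if x \<le> c then 2 * f x else 2 * f x + 1)"
      unfolding S_def T_def using slash_back c by simp
    also have "\<dots> = part {1..n} f"
    proof (rule part_cong)
      fix x y assume x: "x \<in> {1..n}" and y: "y \<in> {1..n}"
      show "((if x \<le> c then 2 * f x else 2 * f x + 1) = (if y \<le> c then 2 * f y else 2 * f y + 1))
            \<longleftrightarrow> f x = f y"
      proof (cases "x \<le> c"; cases "y \<le> c")
        assume "x \<le> c" "\<not> y \<le> c"
        hence "f x \<noteq> f y" using c(3) x y unfolding cutp_def by auto
        thus ?thesis using \<open>x \<le> c\<close> \<open>\<not> y \<le> c\<close> by presburger
      next
        assume "\<not> x \<le> c" "y \<le> c"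
        hence "f y \<noteq> f x" using c(3) x y unfolding cutp_def by auto
        thus ?thesis using \<open>\<not> x \<le> c\<close> \<open>y \<le> c\<close> by presburger
      qed auto
    qed
    finally have "part {1..n} f = slash c S T" by simp
    moreover have "n - c \<ge> 1" using c by simp
    ultimately have ex: "\<exists>a b S T. a \<ge> 1 \<and> b \<ge> 1 \<and> partition_on {1..a} S \<and> partition_on {1..b} T
            \<and> part {1..n} f = slash a S T"
      using pS pT c by (intro exI[of _ c] exI[of _ "n - c"] exI[of _ S] exI[of _ T]) simp
    have "\<not> (\<exists>a b S T. a \<ge> 1 \<and> b \<ge> 1 \<and> partition_on {1..a} S \<and> partition_on {1..b} T
            \<and> part {1..n} f = slash a S T)" using at unfolding atomic_def by (rule conjunct2)
    thus False using ex by contradiction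
  qed
next
  assume nc: "\<not> (\<exists>c. 1 \<le> c \<and> c < n \<and> cutp f n c)"
  show "atomic n (part {1..n} f)" unfolding atomic_def
  proof (intro conjI partition_part notI)
    assume "\<exists>a b S T. 1 \<le> a \<and> 1 \<le> b \<and> partition_on {1..a} S \<and> partition_on {1..b} T
            \<and> part {1..n} f = slash a S T"
    then obtain a b S T where ab: "1 \<le> a" "1 \<le> b" and S: "partition_on {1..a} S"
      and T: "partition_on {1..b} T" and eq: "part {1..n} f = slash a S T" by blast
    have "\<Union>T = {1..b}" using T unfolding partition_on_def by simp
    moreover have "\<Union>(shift_up a T) = (\<lambda>x. x + a) ` \<Union>T"
      unfolding shift_up_def by (rule image_Union[symmetric])
    ultimately have uT: "\<Union>(shift_up a T) = (\<lambda>x. x + a) ` {1..b}" by simp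
    have "\<Union>(slash a S T) = {1..a} \<union> (\<lambda>x. x + a) ` {1..b}"
      unfolding slash_def using S uT unfolding partition_on_def by auto
    also have "\<dots> = {1..a+b}" unfolding img_shift_up by auto
    finally have "{1..n} = {1..a+b}" using eq Union_part by metis
    hence nab: "n = a + b" using interval_eq by blast
    have "cutp f n a" unfolding cutp_def
    proof (intro ballI notI)
      fix x y assume x: "x \<in> {1..a}" and y: "y \<in> {a+1..n}" and fxy: "f x = f y"
      define B where "B = {z\<in>{1..n}. f z = f x}"
      have B: "B \<in> slash a S T" using eq x nab unfolding B_def part_def by auto
      have xB: "x \<in> B" "y \<in> B" using x y fxy nab unfolding B_def by auto
      show False
      proof (cases "B \<in> S")
        case True
        hence "B \<subseteq> {1..a}" using S unfolding partition_on_def by auto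
        thus False using xB y by auto
      next
        case False
        hence "B \<in> shift_up a T" using B unfolding slash_def by auto
        then obtain B' where "B = (\<lambda>x. x + a) ` B'" "B' \<in> T" unfolding shift_up_def by auto
        moreover have "B' \<subseteq> {1..b}" using T \<open>B' \<in> T\<close> unfolding partition_on_def by auto
        ultimately have "B \<subseteq> {a+1..a+b}" by auto
        thus False using xB x by auto
      qed
    qed
    thus False using nc ab nab by auto
  qed
qed

lemma splitpt_iff:
  assumes r: "rgf {1..n} f" and i: "2 \<le> i" "i \<le> n"
  shows "part {1..n} f = split_prod (i - 1) (restr (part {1..n} f) {1..i-1})
            (shift_down (i - 1) (restr (part {1..n} f) {i..n})) \<longleftrightarrow> rgf {i..n} f"
proof
  assume eq: "part {1..n} f = split_prod (i - 1) (restr (part {1..n} f) {1..i-1})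
            (shift_down (i - 1) (restr (part {1..n} f) {i..n}))"
  have pS: "partition_on {1..i-1} (restr (part {1..n} f) {1..i-1})" unfolding restr_part using i
    by (simp add: Int_absorb1 partition_part)
  have ii: "{i..n} = {i-1+1..n}" using i by simp
  have pT: "partition_on {1..n-(i-1)} (shift_down (i - 1) (restr (part {1..n} f) {i..n}))"
    unfolding restr_part ii by (simp add: shift_down_part img_shift_down Int_absorb1 partition_part)
  have "rgf {i-1+1..n} f" using split_rgf[OF r pS pT eq] by (rule conjunct2)
  moreover have "i - 1 + 1 = i" using i by simp
  ultimately show "rgf {i..n} f" by simp
next
  assume ri: "rgf {i..n} f"
  have ii: "i - 1 + 1 = i" using i by simp
  show "part {1..n} f = split_prod (i - 1) (restr (part {1..n} f) {1..i-1})
            (shift_down (i - 1) (restr (part {1..n} f) {i..n}))"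
    using split_back[OF r, of "i - 1"] i ri unfolding ii by simp
qed

lemma splitable_iff:
  assumes r: "rgf {1..n} f"
  shows "splitable n (part {1..n} f) \<longleftrightarrow> (\<exists>i. 2 \<le> i \<and> i \<le> n \<and> rgf {i..n} f)"
proof
  assume "splitable n (part {1..n} f)"
  hence "\<exists>a b S T. a \<ge> 1 \<and> b \<ge> 1 \<and> partition_on {1..a} S \<and> partition_on {1..b} T
            \<and> part {1..n} f = split_prod a S T" unfolding splitable_def by (rule conjunct2)
  then obtain a b S T where ab: "1 \<le> a" "1 \<le> b" and S: "partition_on {1..a} S"
      and T: "partition_on {1..b} T" and eq: "part {1..n} f = split_prod a S T"
    by blast
  from split_rgf[OF r S T eq] ab show "\<exists>i. 2 \<le> i \<and> i \<le> n \<and> rgf {i..n} f"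
    by (intro exI[of _ "a + 1"]) auto
next
  assume "\<exists>i. 2 \<le> i \<and> i \<le> n \<and> rgf {i..n} f"
  then obtain i where i: "2 \<le> i" "i \<le> n" "rgf {i..n} f" by blast
  have pS: "partition_on {1..i-1} (restr (part {1..n} f) {1..i-1})" unfolding restr_part using i
    by (simp add: Int_absorb1 partition_part)
  have ii: "{i..n} = {i-1+1..n}" using i by simp
  have pT: "partition_on {1..n-(i-1)} (shift_down (i - 1) (restr (part {1..n} f) {i..n}))"
    unfolding restr_part ii by (simp add: shift_down_part img_shift_down Int_absorb1 partition_part)
  have eq: "part {1..n} f = split_prod (i - 1) (restr (part {1..n} f) {1..i-1})
            (shift_down (i - 1) (restr (part {1..n} f) {i..n}))"
    using splitpt_iff[OF r i(1,2)] i(3) by simp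
  have "\<exists>a b S T. a \<ge> 1 \<and> b \<ge> 1 \<and> partition_on {1..a} S \<and> partition_on {1..b} T
            \<and> part {1..n} f = split_prod a S T"
    using pS pT eq i by (intro exI[of _ "i - 1"] exI[of _ "n - (i - 1)"] exI conjI) auto
  thus "splitable n (part {1..n} f)" unfolding splitable_def using partition_part by blast
qed


definition ifun :: "(nat \<Rightarrow> nat) \<Rightarrow> nat \<Rightarrow> nat" where
  "ifun f n = (LEAST i. 2 \<le> i \<and> i \<le> n \<and> rgf {i..n} f)"

definition rsf :: "(nat \<Rightarrow> nat) \<Rightarrow> nat \<Rightarrow> nat" where
  "rsf f n = (GREATEST r. r < card (f ` {ifun f n..n}) \<and>
      (\<exists>t\<in>{ifun f n..n}. {x\<in>{ifun f n..n}. r \<le> f x} = {x\<in>{ifun f n..n}. t \<le> x}))"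

definition jf :: "(nat \<Rightarrow> nat) \<Rightarrow> nat \<Rightarrow> nat" where
  "jf f n = Min {x\<in>{ifun f n..n}. rsf f n \<le> f x}"

lemma hd_blocks:
  assumes "1 \<le> n" "rgf {1..n} f"
  shows "hd (blocks (part {1..n} f)) = {x\<in>{1..n}. f x = 0}"
proof -
  have "card (f ` {1..n}) \<noteq> 0" using assms by simp
  hence "[0..<card (f ` {1..n})] = 0 # [1..<card (f ` {1..n})]" by (simp add: upt_rec)
  thus ?thesis using blocks_part[OF _ assms(2)] by simp
qed

lemma rgf_first:
  assumes "rgf {i..n} f" "i \<le> n"
  shows "f i = 0"
proof (rule ccontr)
  assume "f i \<noteq> 0"
  hence "0 < f i" by simp
  then obtain y where "y \<in> {i..n}" "y < i" using assms unfolding rgf_def by fastforce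
  thus False by simp
qed

lemma R_union:
  assumes "i \<le> n" "rgf {i..n} f"
  shows "\<Union>(R_part (part {i..n} f)) = {x\<in>{i..n}. (GREATEST r. r < card (f ` {i..n}) \<and>
      (\<exists>t\<in>{i..n}. {x\<in>{i..n}. r \<le> f x} = {x\<in>{i..n}. t \<le> x})) \<le> f x}"
proof -
  define L where "L = card (f ` {i..n})"
  define S where "S t = {x\<in>{i..n}. f x = t}" for t
  have bs: "blocks (part {i..n} f) = map S [0..<L]"
    using blocks_part[OF _ assms(2)] unfolding L_def S_def by simp
  have lt: "f x < L" if "x \<in> {i..n}" for x using rgf_image_lt[OF _ assms(2) that] unfolding L_def by simp
  have Ud: "\<Union>(set (drop r (map S [0..<L]))) = {x\<in>{i..n}. r \<le> f x}" for r
  proof -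
    have "set (drop r (map S [0..<L])) = S ` {r..<L}" by (simp add: drop_map)
    thus ?thesis unfolding S_def using lt by auto
  qed
  show ?thesis unfolding R_part_def Let_def bs Union_part Ud by (simp add: L_def)
qed

lemma least_eq:
  assumes n: "1 \<le> n" and r: "rgf {1..n} f"
  shows "(LEAST i. i \<in> hd (blocks (part {1..n} f)) \<and> 2 \<le> i \<and>
             part {1..n} f = split_prod (i - 1) (restr (part {1..n} f) {1..i-1})
                (shift_down (i - 1) (restr (part {1..n} f) {i..n}))) = ifun f n"
proof -
  have "(i \<in> hd (blocks (part {1..n} f)) \<and> 2 \<le> i \<and>
             part {1..n} f = split_prod (i - 1) (restr (part {1..n} f) {1..i-1})
                (shift_down (i - 1) (restr (part {1..n} f) {i..n})))
        \<longleftrightarrow> (2 \<le> i \<and> i \<le> n \<and> rgf {i..n} f)" for i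
  proof (cases "2 \<le> i \<and> i \<le> n")
    case True
    have "rgf {i..n} f \<Longrightarrow> f i = 0" using rgf_first True by blast
    thus ?thesis using splitpt_iff[OF r, of i] True hd_blocks[OF n r] by auto
  next
    case False
    thus ?thesis using hd_blocks[OF n r] by auto
  qed
  thus ?thesis unfolding ifun_def by simp
qed

lemma phi_unfold:
  assumes n: "1 \<le> n" and r: "rgf {1..n} f" and i: "2 \<le> ifun f n" "ifun f n \<le> n"
    and ri0: "rgf {ifun f n..n} f" and j: "2 \<le> jf f n" "jf f n \<le> n"
  shows "phi n (part {1..n} f) = part {1..n} (\<lambda>x. if x \<le> jf f n - 1 then 2 * f x else 2 * f x + 1)"
proof -
  define i0 where "i0 = ifun f n"
  have ri: "rgf {i0..n} f" using ri0 unfolding i0_def .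
  have i0n: "i0 \<le> n" using i unfolding i0_def by simp
  have e1: "restr (part {1..n} f) {i0..n} = part {i0..n} f"
    unfolding restr_part using i unfolding i0_def by (simp add: Int_absorb1)
  have jj: "Min (\<Union>(R_part (restr (part {1..n} f) {i0..n}))) = jf f n"
    unfolding e1 R_union[OF i0n ri] using i unfolding jf_def rsf_def i0_def by simp
  have jj1: "jf f n - 1 + 1 = jf f n" using j by simp
  show ?thesis
    unfolding phi_def Let_def least_eq[OF n r] i0_def[symmetric] jj
    using slash_back[of "jf f n - 1" n f] j unfolding jj1 by simp
qed


definition kf :: "(nat \<Rightarrow> nat) \<Rightarrow> nat \<Rightarrow> nat" where
  "kf f n = card (f ` {1..jf f n - 1})"

definition gf :: "(nat \<Rightarrow> nat) \<Rightarrow> nat \<Rightarrow> nat \<Rightarrow> nat" where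
  "gf f n x = (if x < jf f n then f x else f x - rsf f n + kf f n)"

lemma rgf_cong:
  assumes r: "rgf X f" and e: "\<And>x. x \<in> X \<Longrightarrow> f x = f' x"
  shows "rgf X f'"
  unfolding rgf_def
proof (intro ballI allI impI)
  fix x v assume x: "x \<in> X" and v: "v < f' x"
  hence "v < f x" using e by simp
  hence "\<exists>y\<in>X. y < x \<and> f y = v" using r x unfolding rgf_def by blast
  then obtain y where "y \<in> X" "y < x" "f y = v" by blast
  thus "\<exists>y\<in>X. y < x \<and> f' y = v" using e by auto
qed

lemma rgf_imgI:
  assumes "rgf X f" "finite X" "v < card (f ` X)"
  shows "\<exists>y\<in>X. f y = v"
proof -
  obtain K where K: "K = card (f ` X)" by simp
  have "f ` X = {..<K}" unfolding K by (rule rgf_image[OF assms(2,1)])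
  moreover have "v < K" using assms(3) K by simp
  ultimately have "v \<in> f ` X" by simp
  thus ?thesis by auto
qed

locale dom =
  fixes f :: "nat \<Rightarrow> nat" and n :: nat
  assumes n1: "1 \<le> n" and rf: "rgf {1..n} f"
    and nocut: "\<And>c. 1 \<le> c \<Longrightarrow> c < n \<Longrightarrow> \<not> cutp f n c"
    and exsp: "\<exists>i. 2 \<le> i \<and> i \<le> n \<and> rgf {i..n} f"
begin

abbreviation "i \<equiv> ifun f n"
abbreviation "rs \<equiv> rsf f n"
abbreviation "j \<equiv> jf f n"
abbreviation "k \<equiv> kf f n"
abbreviation "g \<equiv> gf f n"
abbreviation "L \<equiv> card (f ` {i..n})"

lemma i_props: "2 \<le> i" "i \<le> n" "rgf {i..n} f"
  using LeastI_ex[OF exsp] unfolding ifun_def by auto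

lemma i_min: "2 \<le> i' \<Longrightarrow> i' \<le> n \<Longrightarrow> rgf {i'..n} f \<Longrightarrow> i \<le> i'"
  unfolding ifun_def by (rule Least_le) simp

definition Q where "Q r \<longleftrightarrow> r < L \<and> (\<exists>t\<in>{i..n}. {x\<in>{i..n}. r \<le> f x} = {x\<in>{i..n}. t \<le> x})"

lemma rs_eq: "rs = Greatest Q"
  unfolding rsf_def Q_def ..

lemma Q0: "Q 0"
proof -
  have "{i..n} \<noteq> {}" using i_props by simp
  hence "0 < L" by (simp add: card_gt_0_iff)
  moreover have "{x\<in>{i..n}. 0 \<le> f x} = {x\<in>{i..n}. i \<le> x}" by auto
  ultimately show ?thesis unfolding Q_def using i_props by auto
qed

lemma Qb: "Q r \<Longrightarrow> r \<le> L" unfolding Q_def by simp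

lemma Q_rs: "Q rs" unfolding rs_eq by (rule GreatestI_nat[of Q 0 L]) (use Q0 Qb in auto)

lemma rs_max: "Q r \<Longrightarrow> r \<le> rs" unfolding rs_eq by (rule Greatest_le_nat[of Q r L]) (use Qb in auto)

lemma j_props: "i \<le> j" "j \<le> n" "{x\<in>{i..n}. rs \<le> f x} = {j..n}"
proof -
  obtain t where t: "t \<in> {i..n}" "{x\<in>{i..n}. rs \<le> f x} = {x\<in>{i..n}. t \<le> x}"
    using Q_rs unfolding Q_def by blast
  have e: "{x\<in>{i..n}. t \<le> x} = {t..n}" using t(1) by auto
  have "j = Min {t..n}" unfolding jf_def t(2) e ..
  also have "\<dots> = t" using t(1) by (intro Min_eqI) auto
  finally have jt: "j = t" .
  show "i \<le> j" "j \<le> n" using t(1) jt by auto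
  show "{x\<in>{i..n}. rs \<le> f x} = {j..n}" unfolding t(2) e jt ..
qed

lemma j_iff:
  assumes x: "x \<in> {i..n}" shows "rs \<le> f x \<longleftrightarrow> j \<le> x"
proof -
  have "x \<in> {x\<in>{i..n}. rs \<le> f x} \<longleftrightarrow> x \<in> {j..n}" by (simp only: j_props(3))
  thus ?thesis using x by simp
qed

lemma rs_L: "rs < L" using Q_rs unfolding Q_def by simp

lemma fj: "f j = rs"
proof -
  have jin: "j \<in> {i..n}" using j_props(1,2) by auto
  have ge: "rs \<le> f j" using j_iff[OF jin] by simp
  show ?thesis
  proof (rule ccontr)
    assume "f j \<noteq> rs"
    hence "rs < f j" using ge by simp
    hence "\<exists>y\<in>{i..n}. y < j \<and> f y = rs" using i_props(3) jin unfolding rgf_def by blast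
    then obtain y where y: "y \<in> {i..n}" "y < j" "f y = rs" by blast
    thus False using j_iff[OF y(1)] by simp
  qed
qed

lemma j2: "2 \<le> j" using i_props j_props(1,2) by simp

lemma f_img_pre: "f ` {1..j-1} = {..<k}"
proof -
  have r: "rgf {1..j-1} f" using rgf_mono_hi[OF rf] j_props(1,2) by simp
  obtain K where K: "K = card (f ` {1..j-1})" by simp
  have "f ` {1..j-1} = {..<K}" unfolding K by (rule rgf_image[OF _ r]) simp
  thus ?thesis unfolding kf_def K by simp
qed

lemma f_pre_lt: "x \<in> {1..j-1} \<Longrightarrow> f x < k"
  using f_img_pre by auto

lemma rs_k: "rs < k"
proof (rule ccontr)
  assume "\<not> rs < k"
  hence kr: "k \<le> rs" by simp
  have "cutp f n (j - 1)" unfolding cutp_def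
  proof (intro ballI)
    fix x y assume x: "x \<in> {1..j-1}" and y: "y \<in> {j-1+1..n}"
    have "f x < k" using f_pre_lt[OF x] .
    moreover have "y \<in> {i..n}" "j \<le> y" using y j2 j_props(1,2) by auto
    hence "rs \<le> f y" using j_iff by blast
    ultimately show "f x \<noteq> f y" using kr by simp
  qed
  moreover have "1 \<le> j - 1" "j - 1 < n" using j2 j_props(1,2) by auto
  ultimately show False using nocut by blast
qed

lemma below_rs: "v < rs \<Longrightarrow> \<exists>y\<in>{i..j-1}. f y = v"
proof -
  assume v: "v < rs"
  have jin: "j \<in> {i..n}" using j_props(1,2) by auto
  hence "\<exists>y\<in>{i..n}. y < j \<and> f y = v" using i_props(3) v fj unfolding rgf_def by simp
  then obtain y where "y \<in> {i..n}" "y < j" "f y = v" by blast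
  thus ?thesis by (intro bexI[of _ y]) auto
qed

lemma mid_lt: "x \<in> {i..j-1} \<Longrightarrow> f x < rs"
proof -
  assume x: "x \<in> {i..j-1}"
  hence "x \<in> {i..n}" "\<not> j \<le> x" using j_props(1,2) j2 by auto
  thus ?thesis using j_iff by (meson not_le)
qed

lemma rs_card: "rs = card (f ` {i..j-1})"
proof -
  have "f ` {i..j-1} = {..<rs}"
  proof
    show "f ` {i..j-1} \<subseteq> {..<rs}" using mid_lt by auto
    show "{..<rs} \<subseteq> f ` {i..j-1}"
    proof
      fix v assume "v \<in> {..<rs}"
      hence "v < rs" by simp
      hence "\<exists>y\<in>{i..j-1}. f y = v" using below_rs by blast
      then obtain y where "y \<in> {i..j-1}" "f y = v" by blast
      thus "v \<in> f ` {i..j-1}" by auto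
    qed
  qed
  thus ?thesis by simp
qed

lemma g_lo: "x < j \<Longrightarrow> g x = f x" unfolding gf_def by simp
lemma g_hi: "j \<le> x \<Longrightarrow> g x = f x - rs + k" unfolding gf_def by simp

lemma ge_rs: "j \<le> x \<Longrightarrow> x \<le> n \<Longrightarrow> rs \<le> f x"
  using j_iff j_props(1,2) by auto

lemma g_hi_ge: "j \<le> x \<Longrightarrow> x \<le> n \<Longrightarrow> k \<le> g x"
  using g_hi by simp

lemma g_rgf: "rgf {1..n} g"
  unfolding rgf_def
proof (intro ballI allI impI)
  fix x v assume x: "x \<in> {1..n}" and v: "v < g x"
  show "\<exists>y\<in>{1..n}. y < x \<and> g y = v"
  proof (cases "x < j")
    case True
    hence "v < f x" using v g_lo by simp
    hence "\<exists>y\<in>{1..n}. y < x \<and> f y = v" using rf x unfolding rgf_def by blast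
    then obtain y where y: "y \<in> {1..n}" "y < x" "f y = v" by blast
    thus ?thesis using True g_lo[of y] by (intro bexI[of _ y]) auto
  next
    case False
    hence jx: "j \<le> x" by simp
    have fx: "rs \<le> f x" using ge_rs jx x by simp
    show ?thesis
    proof (cases "v < k")
      case True
      hence "v \<in> f ` {1..j-1}" using f_img_pre by simp
      then obtain y where y: "y \<in> {1..j-1}" "f y = v" by blast
      hence "y < j" using j2 by auto
      thus ?thesis using y jx j_props(1,2) g_lo[of y] by (intro bexI[of _ y]) auto
    next
      case False
      define w where "w = v - k + rs"
      have "w < f x" using v False fx g_hi[OF jx] unfolding w_def by simp
      moreover have "x \<in> {i..n}" using x jx j_props(1,2) by auto
      ultimately have "\<exists>y\<in>{i..n}. y < x \<and> f y = w" using i_props(3) unfolding rgf_def by blast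
      then obtain y where y: "y \<in> {i..n}" "y < x" "f y = w" by blast
      have "rs \<le> w" unfolding w_def using False by simp
      hence jy: "j \<le> y" using j_iff[OF y(1)] y by simp
      have "g y = v" using g_hi[OF jy] y False unfolding w_def by simp
      thus ?thesis using y i_props by (intro bexI[of _ y]) auto
    qed
  qed
qed

lemma g_cut: "cutp g n (j - 1)"
  unfolding cutp_def
proof (intro ballI)
  fix x y assume x: "x \<in> {1..j-1}" and y: "y \<in> {j-1+1..n}"
  have "g x = f x" using x j2 g_lo by auto
  hence "g x < k" using f_pre_lt[OF x] by simp
  moreover have "k \<le> g y" using g_hi_ge y j2 by auto
  ultimately show "g x \<noteq> g y" by simp
qed

lemma g_unsplit: "2 \<le> b \<Longrightarrow> b \<le> n \<Longrightarrow> \<not> rgf {b..n} g"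
proof
  assume b: "2 \<le> b" "b \<le> n" and rb: "rgf {b..n} g"
  show False
  proof (cases "j \<le> b")
    case True
    have "g b = 0" using rgf_first[OF rb b(2)] .
    moreover have "k \<le> g b" using g_hi_ge True b by simp
    ultimately show False using rs_k by simp
  next
    case False
    hence bj: "b < j" by simp
    have gj: "g j = k" using g_hi[of j] fj by simp
    have jin: "j \<in> {b..n}" using bj j_props(1,2) by auto
    have "rs < g j" using gj rs_k by simp
    hence "\<exists>y\<in>{b..n}. y < j \<and> g y = rs" using rb jin unfolding rgf_def by blast
    then obtain y where y: "y \<in> {b..n}" "y < j" "g y = rs" by blast
    have fy: "f y = rs" using y g_lo by simp
    have rfb: "rgf {b..n} f" unfolding rgf_def
    proof (intro ballI allI impI)
      fix x v assume x: "x \<in> {b..n}" and v: "v < f x"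
      show "\<exists>y\<in>{b..n}. y < x \<and> f y = v"
      proof (cases "x < j")
        case True
        hence "v < g x" using v g_lo by simp
        hence "\<exists>y\<in>{b..n}. y < x \<and> g y = v" using rb x unfolding rgf_def by blast
        then obtain z where z: "z \<in> {b..n}" "z < x" "g z = v" by blast
        thus ?thesis using True g_lo[of z] by (intro bexI[of _ z]) auto
      next
        case False
        hence jx: "j \<le> x" by simp
        have fx: "rs \<le> f x" using ge_rs jx x by simp
        show ?thesis
        proof (cases "v < rs")
          case True
          hence "v < g j" using gj rs_k by simp
          hence "\<exists>z\<in>{b..n}. z < j \<and> g z = v" using rb jin unfolding rgf_def by blast
          then obtain z where z: "z \<in> {b..n}" "z < j" "g z = v" by blast
          have "f z = v" using z g_lo by simp
          thus ?thesis using z jx by (intro bexI[of _ z]) auto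
        next
          case False
          define w where "w = v - rs + k"
          have "w < g x" using v False fx g_hi[OF jx] unfolding w_def by simp
          hence "\<exists>z\<in>{b..n}. z < x \<and> g z = w" using rb x unfolding rgf_def by blast
          then obtain z where z: "z \<in> {b..n}" "z < x" "g z = w" by blast
          have jz: "j \<le> z"
          proof (rule ccontr)
            assume "\<not> j \<le> z"
            hence "g z = f z" "z \<in> {1..j-1}" using g_lo z b by auto
            hence "g z < k" using f_pre_lt by simp
            thus False using z(3) unfolding w_def by simp
          qed
          have "f z = v" using g_hi[OF jz] z(3) ge_rs[OF jz] z False unfolding w_def by simp
          thus ?thesis using z by (intro bexI[of _ z]) auto
        qed
      qed
    qed
    have "i \<le> b" using i_min[OF b rfb] .
    hence "y \<in> {i..j-1}" using y by auto
    hence "f y < rs" using mid_lt by simp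
    thus False using fy by simp
  qed
qed

lemma g_nolater:
  assumes jc: "j \<le> c" and cn: "c < n"
  shows "\<not> cutp g n c"
proof
  assume cut: "cutp g n c"
  define Y where "Y = {c+1..n}"
  have Yne: "Y \<noteq> {}" "finite Y" using cn unfolding Y_def by auto
  define r' where "r' = Min (f ` Y)"
  have "r' \<in> f ` Y" unfolding r'_def using Yne by simp
  then obtain y0 where y0: "y0 \<in> Y" "f y0 = r'" by blast
  have y0j: "j \<le> y0" "y0 \<le> n" using y0 jc unfolding Y_def by auto
  have y0rs: "rs \<le> r'" using ge_rs[OF y0j] y0 by simp
  have iff: "r' \<le> f x \<longleftrightarrow> c + 1 \<le> x" if x: "x \<in> {i..n}" for x
  proof
    assume "c + 1 \<le> x"
    hence "x \<in> Y" using x unfolding Y_def by auto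
    thus "r' \<le> f x" unfolding r'_def using Yne by simp
  next
    assume rx: "r' \<le> f x"
    show "c + 1 \<le> x"
    proof (rule ccontr)
      assume "\<not> c + 1 \<le> x"
      hence xc: "x \<le> c" by simp
      have "\<exists>z\<in>{i..n}. z \<le> x \<and> f z = r'"
      proof (cases "f x = r'")
        case True thus ?thesis using x by blast
      next
        case False
        hence "r' < f x" using rx by simp
        hence "\<exists>z\<in>{i..n}. z < x \<and> f z = r'" using i_props(3) x unfolding rgf_def by blast
        thus ?thesis by (meson less_imp_le)
      qed
      then obtain z where z: "z \<in> {i..n}" "z \<le> x" "f z = r'" by blast
      show False
      proof (cases "z < j")
        case True
        hence "z \<in> {i..j-1}" using z by auto
        hence "f z < rs" using mid_lt by simp
        thus False using z y0rs by simp
      next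
        case False
        hence jz: "j \<le> z" by simp
        have "g z = g y0" using g_hi[OF jz] g_hi[OF y0j(1)] z y0 by simp
        moreover have "z \<in> {1..c}" using z xc i_props by auto
        moreover have "y0 \<in> {c+1..n}" using y0(1) unfolding Y_def .
        ultimately show False using cut unfolding cutp_def by blast
      qed
    qed
  qed
  have seteq: "{x\<in>{i..n}. r' \<le> f x} = {x\<in>{i..n}. c + 1 \<le> x}"
    using iff by blast
  have y0in: "y0 \<in> {i..n}" using y0j j_props(1,2) by auto
  have "r' < L" using rgf_image_lt[OF _ i_props(3) y0in] y0 by simp
  moreover have "c + 1 \<in> {i..n}" using jc cn j_props(1,2) by auto
  ultimately have "Q r'" unfolding Q_def using seteq by blast
  hence "r' \<le> rs" by (rule rs_max)
  hence rr: "r' = rs" using y0rs by simp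
  have jin: "j \<in> {i..n}" using j_props(1,2) by auto
  have "r' \<le> f j" using fj rr by simp
  hence "c + 1 \<le> j" using iff[OF jin] by simp
  thus False using jc by simp
qed

lemma g_minA:
  assumes b: "2 \<le> b" "b < i" and rb: "rgf {b..j-1} f"
  shows False
proof -
  have "rgf {b..n} f" unfolding rgf_def
  proof (intro ballI allI impI)
    fix x v assume x: "x \<in> {b..n}" and v: "v < f x"
    show "\<exists>y\<in>{b..n}. y < x \<and> f y = v"
    proof (cases "x \<le> j - 1")
      case True
      hence "x \<in> {b..j-1}" using x by auto
      hence "\<exists>y\<in>{b..j-1}. y < x \<and> f y = v" using rb v unfolding rgf_def by blast
      then obtain y where "y \<in> {b..j-1}" "y < x" "f y = v" by blast
      thus ?thesis using j_props(1,2) by (intro bexI[of _ y]) auto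
    next
      case False
      hence "x \<in> {i..n}" using x j2 j_props(1,2) by auto
      hence "\<exists>y\<in>{i..n}. y < x \<and> f y = v" using i_props(3) v unfolding rgf_def by blast
      then obtain y where "y \<in> {i..n}" "y < x" "f y = v" by blast
      thus ?thesis using b by (intro bexI[of _ y]) auto
    qed
  qed
  moreover have "b \<le> n" using b i_props by simp
  ultimately have "i \<le> b" using i_min b by simp
  thus False using b by simp
qed

lemma phi_eq: "phi n (part {1..n} f) = part {1..n} g"
proof -
  have "phi n (part {1..n} f) = part {1..n} (\<lambda>x. if x \<le> j - 1 then 2 * f x else 2 * f x + 1)"
    by (rule phi_unfold[OF n1 rf i_props(1,2,3) j2 j_props(2)])
  also have "\<dots> = part {1..n} g"
  proof (rule part_cong)
    fix x y assume x: "x \<in> {1..n}" and y: "y \<in> {1..n}"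
    show "((if x \<le> j - 1 then 2 * f x else 2 * f x + 1) = (if y \<le> j - 1 then 2 * f y else 2 * f y + 1))
          \<longleftrightarrow> g x = g y"
    proof (cases "x < j"; cases "y < j")
      assume a: "x < j" "y < j"
      hence "x \<le> j - 1" "y \<le> j - 1" by auto
      thus ?thesis using a g_lo by simp
    next
      assume a: "\<not> x < j" "\<not> y < j"
      hence "\<not> x \<le> j - 1" "\<not> y \<le> j - 1" "j \<le> x" "j \<le> y" using j2 by auto
      moreover have "rs \<le> f x" "rs \<le> f y" using ge_rs a x y by auto
      ultimately show ?thesis using g_hi by auto
    next
      assume a: "x < j" "\<not> y < j"
      hence "x \<le> j - 1" "\<not> y \<le> j - 1" "j \<le> y" using j2 by auto
      moreover have "g x < k" using a g_lo f_pre_lt x by auto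
      moreover have "k \<le> g y" using g_hi_ge a y by auto
      ultimately show ?thesis by presburger
    next
      assume a: "\<not> x < j" "y < j"
      hence "\<not> x \<le> j - 1" "y \<le> j - 1" "j \<le> x" using j2 by auto
      moreover have "g y < k" using a g_lo f_pre_lt y by auto
      moreover have "k \<le> g x" using g_hi_ge a x by auto
      ultimately show ?thesis by presburger
    qed
  qed
  finally show ?thesis .
qed

end


lemma cutp_cong:
  assumes "\<And>x. x \<in> {1..n} \<Longrightarrow> g x = g' x" "c \<le> n"
  shows "cutp g n c \<longleftrightarrow> cutp g' n c"
  unfolding cutp_def using assms by auto

lemma dom_inj:
  assumes A: "dom f1 n" and B: "dom f2 n"
    and eq: "part {1..n} (gf f1 n) = part {1..n} (gf f2 n)"
  shows "part {1..n} f1 = part {1..n} f2"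
proof -
  interpret A: dom f1 n by (rule A)
  interpret B: dom f2 n by (rule B)
  have geq: "gf f1 n x = gf f2 n x" if "x \<in> {1..n}" for x
    using rgf_unique[OF A.g_rgf B.g_rgf _ that] eq part_eq_iff by blast
  have jle: "jf f1 n \<le> jf f2 n" if AA: "dom f1 n" and BB: "dom f2 n"
      and ge: "\<And>x. x \<in> {1..n} \<Longrightarrow> gf f1 n x = gf f2 n x" for f1 f2
  proof (rule ccontr)
    interpret C: dom f1 n by (rule AA)
    interpret D: dom f2 n by (rule BB)
    assume "\<not> jf f1 n \<le> jf f2 n"
    hence lt: "jf f2 n < jf f1 n" by simp
    have "cutp (gf f2 n) n (jf f1 n - 1)" using C.g_cut cutp_cong[of n "gf f1 n" "gf f2 n"] ge C.j_props(2) by simp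
    moreover have "jf f2 n \<le> jf f1 n - 1" "jf f1 n - 1 < n" using lt C.j2 C.j_props(2) by auto
    ultimately show False using D.g_nolater by blast
  qed
  have jeq: "jf f1 n = jf f2 n" using jle[OF A B geq] jle[OF B A] geq by (simp add: le_antisym)
  define j where "j = jf f1 n"
  have lo: "f1 x = f2 x" if "x \<in> {1..j-1}" for x
  proof -
    have "x < jf f1 n" "x < jf f2 n" "x \<in> {1..n}" using that jeq A.j2 A.j_props(2) unfolding j_def by auto
    thus ?thesis using geq A.g_lo B.g_lo by metis
  qed
  have ile: "ifun f1 n \<le> ifun f2 n" if AA: "dom f1 n" and BB: "dom f2 n" and jj: "jf f1 n = jf f2 n"
      and lo: "\<And>x. x \<in> {1..jf f1 n - 1} \<Longrightarrow> f1 x = f2 x" for f1 f2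
  proof (rule ccontr)
    interpret C: dom f1 n by (rule AA)
    interpret D: dom f2 n by (rule BB)
    assume "\<not> ifun f1 n \<le> ifun f2 n"
    hence lt: "ifun f2 n < ifun f1 n" by simp
    have "rgf {ifun f2 n..jf f2 n - 1} f2" using rgf_mono_hi[OF D.i_props(3)] D.j_props(2) by simp
    moreover have "\<And>x. x \<in> {ifun f2 n..jf f2 n - 1} \<Longrightarrow> f2 x = f1 x" using lo jj D.i_props by auto
    ultimately have "rgf {ifun f2 n..jf f1 n - 1} f1" using rgf_cong jj by metis
    thus False using C.g_minA[of "ifun f2 n"] lt D.i_props by simp
  qed
  have lo': "\<And>x. x \<in> {1..jf f2 n - 1} \<Longrightarrow> f2 x = f1 x" using lo jeq unfolding j_def by auto
  have ieq: "ifun f1 n = ifun f2 n"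
    using ile[OF A B jeq] ile[OF B A jeq[symmetric] lo'] lo unfolding j_def by (simp add: le_antisym)
  have rseq: "rsf f1 n = rsf f2 n"
  proof -
    have "f1 ` {ifun f1 n..j-1} = f2 ` {ifun f2 n..j-1}"
      using lo ieq A.i_props by (intro image_cong) auto
    thus ?thesis using A.rs_card B.rs_card jeq unfolding j_def by simp
  qed
  have keq: "kf f1 n = kf f2 n"
  proof -
    have "f1 ` {1..j-1} = f2 ` {1..j-1}" using lo by (intro image_cong) auto
    thus ?thesis unfolding kf_def using jeq unfolding j_def by simp
  qed
  show ?thesis
  proof (rule part_cong_fun)
    fix x assume x: "x \<in> {1..n}"
    show "f1 x = f2 x"
    proof (cases "x < j")
      case True thus ?thesis using lo x by auto
    next
      case False
      hence "jf f1 n \<le> x" "jf f2 n \<le> x" using jeq unfolding j_def by auto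
      moreover have "rsf f1 n \<le> f1 x" "rsf f2 n \<le> f2 x" using A.ge_rs B.ge_rs x calculation by auto
      ultimately show ?thesis using geq[OF x] A.g_hi B.g_hi rseq keq by simp
    qed
  qed
qed


lemma rgf_empty: "rgf {} h" unfolding rgf_def by simp

lemma surj_ex:
  assumes n1: "1 \<le> n" and rg: "rgf {1..n} g"
    and excut: "\<exists>c. 1 \<le> c \<and> c < n \<and> cutp g n c"
    and unsp: "\<And>b. 2 \<le> b \<Longrightarrow> b \<le> n \<Longrightarrow> \<not> rgf {b..n} g"
  shows "\<exists>f. dom f n \<and> part {1..n} (gf f n) = part {1..n} g"
proof -
  define CP where "CP c \<longleftrightarrow> 1 \<le> c \<and> c < n \<and> cutp g n c" for c
  define c where "c = Greatest CP"
  obtain c0 where c0: "CP c0" using excut unfolding CP_def by blast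
  have CPb: "CP y \<Longrightarrow> y \<le> n" for y unfolding CP_def by simp
  have cP: "CP c" unfolding c_def by (rule GreatestI_nat[of CP c0 n]) (use c0 CPb in auto)
  have cmax: "CP c' \<Longrightarrow> c' \<le> c" for c' unfolding c_def by (rule Greatest_le_nat[of CP c' n]) (use CPb in auto)
  have c1: "1 \<le> c" and cn: "c < n" and ccut: "cutp g n c" using cP unfolding CP_def by auto
  define k where "k = card (g ` {1..c})"
  have gimg: "g ` {1..c} = {..<k}" unfolding k_def
    by (rule rgf_image[OF _ rgf_mono_hi[OF rg]]) (use cn in auto)
  have k1: "1 \<le> k" unfolding k_def using c1 by (simp add: Suc_le_eq card_gt_0_iff)
  have g_lt: "g x < k" if "x \<in> {1..c}" for x using gimg that by blast
  have g_ge: "k \<le> g y" if y: "y \<in> {c+1..n}" for y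
  proof (rule ccontr)
    assume "\<not> k \<le> g y"
    hence "g y \<in> g ` {1..c}" using gimg by simp
    then obtain x where "x \<in> {1..c}" "g x = g y" by auto
    thus False using ccut y unfolding cutp_def by metis
  qed
  define Cand where "Cand i' \<longleftrightarrow> 2 \<le> i' \<and> i' \<le> c + 1 \<and> rgf {i'..c} g \<and> card (g ` {i'..c}) < k" for i'
  have Cc: "Cand (c + 1)" unfolding Cand_def using c1 k1 rgf_empty by auto
  define i where "i = Least Cand"
  have Ci: "Cand i" unfolding i_def by (rule LeastI[of Cand "c + 1", OF Cc])
  have imin: "Cand i' \<Longrightarrow> i \<le> i'" for i' unfolding i_def by (rule Least_le)
  have i2: "2 \<le> i" and ic: "i \<le> c + 1" and rgi: "rgf {i..c} g" and rk: "card (g ` {i..c}) < k"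
    using Ci unfolding Cand_def by auto
  define r where "r = card (g ` {i..c})"
  have rimg: "g ` {i..c} = {..<r}" unfolding r_def by (rule rgf_image[OF _ rgi]) simp
  have rk': "r < k" using rk unfolding r_def .
  define f where "f x = (if x \<le> c then g x else g x - k + r)" for x
  have f_lo: "x \<le> c \<Longrightarrow> f x = g x" for x unfolding f_def by simp
  have f_hi: "c < x \<Longrightarrow> f x = g x - k + r" for x unfolding f_def by simp
  have f_hi_ge: "c < x \<Longrightarrow> x \<le> n \<Longrightarrow> r \<le> f x" for x using f_hi by simp
  have gc1: "g (c + 1) = k"
  proof -
    have ge: "k \<le> g (c + 1)" using g_ge cn by simp
    show ?thesis
    proof (rule ccontr)
      assume "g (c + 1) \<noteq> k"
      hence "k < g (c + 1)" using ge by simp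
      moreover have "c + 1 \<in> {1..n}" using cn by simp
      ultimately have "\<exists>y\<in>{1..n}. y < c + 1 \<and> g y = k" using rg unfolding rgf_def by blast
      then obtain y where "y \<in> {1..n}" "y < c + 1" "g y = k" by blast
      hence "y \<in> {1..c}" "g y = k" by auto
      thus False using g_lt by fastforce
    qed
  qed
  have fc1: "f (c + 1) = r" using f_hi gc1 by simp
  have rf: "rgf {1..n} f" unfolding rgf_def
  proof (intro ballI allI impI)
    fix x v assume x: "x \<in> {1..n}" and v: "v < f x"
    show "\<exists>y\<in>{1..n}. y < x \<and> f y = v"
    proof (cases "x \<le> c")
      case True
      hence "v < g x" using v f_lo by simp
      hence "\<exists>y\<in>{1..n}. y < x \<and> g y = v" using rg x unfolding rgf_def by blast
      then obtain y where y: "y \<in> {1..n}" "y < x" "g y = v" by blast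
      thus ?thesis using True f_lo[of y] by (intro bexI[of _ y]) auto
    next
      case False
      show ?thesis
      proof (cases "v < r")
        case True
        hence "v \<in> g ` {1..c}" using gimg rk' by simp
        then obtain y where y: "y \<in> {1..c}" "g y = v" by blast
        thus ?thesis using False x f_lo[of y] by (intro bexI[of _ y]) auto
      next
        case vr: False
        define w where "w = v - r + k"
        have gx: "k \<le> g x" using g_ge x False by simp
        have "w < g x" using v vr f_hi[of x] False gx unfolding w_def by simp
        hence "\<exists>y\<in>{1..n}. y < x \<and> g y = w" using rg x unfolding rgf_def by blast
        then obtain y where y: "y \<in> {1..n}" "y < x" "g y = w" by blast
        have yc: "c < y"
        proof (rule ccontr)
          assume "\<not> c < y"
          hence "g y < k" using g_lt[of y] y by auto
          thus False using y(3) unfolding w_def by simp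
        qed
        have "f y = v" using f_hi[OF yc] y(3) vr unfolding w_def by simp
        thus ?thesis using y by (intro bexI[of _ y]) auto
      qed
    qed
  qed
  have nocut: "\<not> cutp f n c'" if c': "1 \<le> c'" "c' < n" for c'
  proof
    assume fcut: "cutp f n c'"
    have c1in: "c + 1 \<in> {1..n}" using cn by simp
    show False
    proof (cases c' c rule: linorder_cases)
      case equal
      have "r \<in> g ` {1..c}" using gimg rk' by simp
      then obtain x where x: "x \<in> {1..c}" "g x = r" by blast
      have "f x = f (c + 1)" using f_lo[of x] x fc1 by simp
      moreover have "c + 1 \<in> {c'+1..n}" using equal cn by simp
      ultimately show False using fcut x equal unfolding cutp_def by blast
    next
      case greater
      have "\<not> CP c'" using cmax greater by (meson not_le)
      hence "\<not> cutp g n c'" using c' unfolding CP_def by simp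
      then obtain x y where xy: "x \<in> {1..c'}" "y \<in> {c'+1..n}" "g x = g y" unfolding cutp_def by blast
      have yc: "c < y" using xy greater by simp
      have "k \<le> g y" using g_ge xy greater by simp
      hence xc: "c < x"
        using g_lt xy by (metis atLeastAtMost_iff not_le)
      have "f x = f y" using f_hi[OF xc] f_hi[OF yc] xy by simp
      thus False using fcut xy unfolding cutp_def by blast
    next
      case less
      define m where "m = card (g ` {1..c'})"
      have mimg: "g ` {1..c'} = {..<m}" unfolding m_def
        by (rule rgf_image[OF _ rgf_mono_hi[OF rg]]) (use c' in auto)
      show False
      proof (cases "r < m")
        case True
        hence "r \<in> g ` {1..c'}" using mimg by simp
        then obtain x where x: "x \<in> {1..c'}" "g x = r" by blast
        have "f x = f (c + 1)" using f_lo[of x] x fc1 less by simp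
        moreover have "c + 1 \<in> {c'+1..n}" using less cn by simp
        ultimately show False using fcut x unfolding cutp_def by blast
      next
        case False
        have m1: "1 \<le> m" unfolding m_def using c' by (simp add: Suc_le_eq card_gt_0_iff)
        hence r1: "1 \<le> r" using False by simp
        have icc: "i \<le> c"
        proof (rule ccontr)
          assume "\<not> i \<le> c"
          hence "{i..c} = {}" by simp
          thus False using r1 unfolding r_def by simp
        qed
        show False
        proof (cases "c' < i")
          case True
          have "g i = 0" using rgf_first[OF rgi icc] .
          hence "f i = 0" using f_lo icc by simp
          moreover have "f 1 = 0" using rgf_first[OF rf] n1 by simp
          moreover have "1 \<in> {1..c'}" "i \<in> {c'+1..n}" using c' True icc cn by auto
          ultimately show False using fcut unfolding cutp_def by metis
        next
          case False
          hence ic': "i \<le> c'" by simp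
          have gm: "m \<le> g (c' + 1)"
          proof (rule ccontr)
            assume "\<not> m \<le> g (c' + 1)"
            hence "g (c' + 1) \<in> g ` {1..c'}" using mimg by simp
            then obtain x where x: "x \<in> {1..c'}" "g x = g (c' + 1)" by (metis imageE)
            have "f x = f (c' + 1)" using x f_lo[of x] f_lo[of "c' + 1"] less by simp
            moreover have "c' + 1 \<in> {c'+1..n}" using c' by simp
            ultimately show False using fcut x unfolding cutp_def by blast
          qed
          have sub1: "{..<m} \<subseteq> g ` {i..c}"
          proof
            fix v assume "v \<in> {..<m}"
            hence "v < g (c' + 1)" using gm by simp
            moreover have "c' + 1 \<in> {i..c}" using ic' less by simp
            ultimately have "\<exists>y\<in>{i..c}. y < c' + 1 \<and> g y = v" using rgi unfolding rgf_def by blast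
            thus "v \<in> g ` {i..c}" by blast
          qed
          have "g ` {1..c} \<subseteq> g ` {i..c}"
          proof
            fix w assume "w \<in> g ` {1..c}"
            then obtain x where x: "x \<in> {1..c}" "w = g x" by blast
            show "w \<in> g ` {i..c}"
            proof (cases "x \<le> c'")
              case True
              hence "g x \<in> g ` {1..c'}" using x by simp
              hence "g x \<in> {..<m}" using mimg by simp
              thus ?thesis using sub1 x by blast
            next
              case False
              hence "x \<in> {i..c}" using x ic' by auto
              thus ?thesis using x by blast
            qed
          qed
          hence "k \<le> r" unfolding k_def r_def by (intro card_mono) auto
          thus False using rk' by simp
        qed
      qed
    qed
  qed
  have in_: "i \<le> n" using ic cn by simp
  have rfi: "rgf {i..n} f" unfolding rgf_def
  proof (intro ballI allI impI)
    fix x v assume x: "x \<in> {i..n}" and v: "v < f x"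
    show "\<exists>y\<in>{i..n}. y < x \<and> f y = v"
    proof (cases "x \<le> c")
      case True
      hence "v < g x" "x \<in> {i..c}" using v f_lo x by auto
      hence "\<exists>y\<in>{i..c}. y < x \<and> g y = v" using rgi unfolding rgf_def by blast
      then obtain y where y: "y \<in> {i..c}" "y < x" "g y = v" by blast
      thus ?thesis using f_lo[of y] cn by (intro bexI[of _ y]) auto
    next
      case False
      show ?thesis
      proof (cases "v < r")
        case True
        hence "v \<in> g ` {i..c}" using rimg by simp
        then obtain y where y: "y \<in> {i..c}" "g y = v" by blast
        thus ?thesis using False x f_lo[of y] by (intro bexI[of _ y]) auto
      next
        case vr: False
        define w where "w = v - r + k"
        have xin: "x \<in> {1..n}" using x i2 by auto
        have gx: "k \<le> g x" using g_ge x False by simp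
        have "w < g x" using v vr f_hi[of x] False gx unfolding w_def by simp
        hence "\<exists>y\<in>{1..n}. y < x \<and> g y = w" using rg xin unfolding rgf_def by blast
        then obtain y where y: "y \<in> {1..n}" "y < x" "g y = w" by blast
        have yc: "c < y"
        proof (rule ccontr)
          assume "\<not> c < y"
          hence "g y < k" using g_lt[of y] y by auto
          thus False using y(3) unfolding w_def by simp
        qed
        have "f y = v" using f_hi[OF yc] y(3) vr unfolding w_def by simp
        thus ?thesis using y yc ic by (intro bexI[of _ y]) auto
      qed
    qed
  qed
  have D: "dom f n"
  proof
    show "1 \<le> n" by (rule n1)
    show "rgf {1..n} f" by (rule rf)
    show "\<And>c. 1 \<le> c \<Longrightarrow> c < n \<Longrightarrow> \<not> cutp f n c" using nocut by blast
    show "\<exists>i. 2 \<le> i \<and> i \<le> n \<and> rgf {i..n} f" using i2 in_ rfi by blast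
  qed
  have ifeq: "ifun f n = i" unfolding ifun_def
  proof (rule Least_equality)
    show "2 \<le> i \<and> i \<le> n \<and> rgf {i..n} f" using i2 in_ rfi by simp
    fix i' assume i': "2 \<le> i' \<and> i' \<le> n \<and> rgf {i'..n} f"
    show "i \<le> i'"
    proof (rule ccontr)
      assume "\<not> i \<le> i'"
      hence lt: "i' < i" by simp
      hence i'c: "i' \<le> c" using ic by simp
      have rgi': "rgf {i'..c} g"
        using rgf_cong[OF rgf_mono_hi[of i' n f c]] i' cn f_lo by auto
      have "card (g ` {i'..c}) \<le> k" unfolding k_def using i' by (intro card_mono) auto
      moreover have "\<not> Cand i'" using imin lt by (meson not_le)
      ultimately have sk: "card (g ` {i'..c}) = k" using i' i'c rgi' unfolding Cand_def by auto
      have img': "g ` {i'..c} = {..<k}" unfolding sk[symmetric] by (rule rgf_image[OF _ rgi']) simp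
      have "rgf {i'..n} g" unfolding rgf_def
      proof (intro ballI allI impI)
        fix x v assume x: "x \<in> {i'..n}" and v: "v < g x"
        show "\<exists>y\<in>{i'..n}. y < x \<and> g y = v"
        proof (cases "x \<le> c")
          case True
          hence "v < f x" using v f_lo by simp
          hence "\<exists>y\<in>{i'..n}. y < x \<and> f y = v" using i' x unfolding rgf_def by blast
          then obtain y where y: "y \<in> {i'..n}" "y < x" "f y = v" by blast
          thus ?thesis using True f_lo[of y] by (intro bexI[of _ y]) auto
        next
          case False
          show ?thesis
          proof (cases "v < k")
            case True
            hence "v \<in> g ` {i'..c}" using img' by simp
            then obtain y where y: "y \<in> {i'..c}" "g y = v" by blast
            thus ?thesis using False x by (intro bexI[of _ y]) auto
          next
            case vk: False
            have xin: "x \<in> {1..n}" using x i' by auto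
            hence "\<exists>y\<in>{1..n}. y < x \<and> g y = v" using rg v unfolding rgf_def by blast
            then obtain y where y: "y \<in> {1..n}" "y < x" "g y = v" by blast
            have yc: "c < y"
            proof (rule ccontr)
              assume "\<not> c < y"
              hence "g y < k" using g_lt[of y] y by auto
              thus False using y(3) vk by simp
            qed
            thus ?thesis using y i'c by (intro bexI[of _ y]) auto
          qed
        qed
      qed
      thus False using unsp i' by blast
    qed
  qed
  have c1i: "c + 1 \<in> {i..n}" using ic cn by simp
  have rlow: "f x < r" if "x \<in> {i..c}" for x using rimg that f_lo by auto
  have setr: "r \<le> f x \<longleftrightarrow> c + 1 \<le> x" if x: "x \<in> {i..n}" for x
  proof (cases "x \<le> c")
    case True thus ?thesis using rlow[of x] x by auto
  next
    case False thus ?thesis using f_hi_ge[of x] x by auto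
  qed
  have rseq: "rsf f n = r" unfolding rsf_def ifeq
  proof (rule Greatest_equality)
    have "r < card (f ` {i..n})" using rgf_image_lt[OF _ rfi c1i] fc1 by simp
    moreover have "{x\<in>{i..n}. r \<le> f x} = {x\<in>{i..n}. c + 1 \<le> x}" using setr by blast
    ultimately show "r < card (f ` {i..n}) \<and> (\<exists>t\<in>{i..n}. {x\<in>{i..n}. r \<le> f x} = {x\<in>{i..n}. t \<le> x})"
      using c1i by blast
    fix r' assume "r' < card (f ` {i..n}) \<and> (\<exists>t\<in>{i..n}. {x\<in>{i..n}. r' \<le> f x} = {x\<in>{i..n}. t \<le> x})"
    then obtain t where t: "t \<in> {i..n}" and teq: "{x\<in>{i..n}. r' \<le> f x} = {x\<in>{i..n}. t \<le> x}" by blast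
    have tiff: "r' \<le> f x \<longleftrightarrow> t \<le> x" if x: "x \<in> {i..n}" for x
    proof -
      have "x \<in> {x\<in>{i..n}. r' \<le> f x} \<longleftrightarrow> x \<in> {x\<in>{i..n}. t \<le> x}" by (simp only: teq)
      thus ?thesis using x by simp
    qed
    show "r' \<le> r"
    proof (rule ccontr)
      assume "\<not> r' \<le> r"
      hence rr: "r < r'" by simp
      have "\<not> t \<le> c + 1" using tiff[OF c1i] fc1 rr by simp
      hence tc: "c + 1 < t" by simp
      have "cutp g n (t - 1)" unfolding cutp_def
      proof (intro ballI)
        fix x y assume x: "x \<in> {1..t-1}" and y: "y \<in> {t-1+1..n}"
        have yt: "t \<le> y" "y \<le> n" using y tc by auto
        have yi: "y \<in> {i..n}" using yt t by auto
        have fy: "r' \<le> f y" using tiff[OF yi] yt by simp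
        have yc: "c < y" using yt tc by simp
        have gy: "k \<le> g y" using g_ge yc yt by simp
        show "g x \<noteq> g y"
        proof (cases "x \<le> c")
          case True
          hence "g x < k" using g_lt[of x] x by auto
          thus ?thesis using gy by simp
        next
          case False
          hence xi: "x \<in> {i..n}" using x ic t by auto
          have "\<not> r' \<le> f x" using tiff[OF xi] x tc by auto
          hence "f x \<noteq> f y" using fy by auto
          moreover have "x \<in> {c+1..n}" using False x t by auto
          hence "k \<le> g x" using g_ge by blast
          ultimately show ?thesis using f_hi[of x] f_hi[OF yc] False gy by auto
        qed
      qed
      moreover have "1 \<le> t - 1" "t - 1 < n" using tc t by auto
      ultimately have "CP (t - 1)" unfolding CP_def by simp
      hence "t - 1 \<le> c" by (rule cmax)
      thus False using tc by simp
    qed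
  qed
  have jeq: "jf f n = c + 1"
  proof -
    have "{x\<in>{ifun f n..n}. rsf f n \<le> f x} = {c+1..n}" unfolding ifeq rseq using setr ic by auto
    hence "jf f n = Min {c+1..n}" unfolding jf_def by simp
    also have "\<dots> = c + 1" using cn by (intro Min_eqI) auto
    finally show ?thesis .
  qed
  have keq: "kf f n = k"
  proof -
    have "f ` {1..c} = g ` {1..c}" using f_lo by (intro image_cong) auto
    thus ?thesis unfolding kf_def jeq k_def by simp
  qed
  have "part {1..n} (gf f n) = part {1..n} g"
  proof (rule part_cong_fun)
    fix x assume x: "x \<in> {1..n}"
    show "gf f n x = g x"
    proof (cases "x < c + 1")
      case True thus ?thesis unfolding gf_def jeq using f_lo by simp
    next
      case False
      hence "k \<le> g x" using g_ge x by simp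
      thus ?thesis unfolding gf_def jeq rseq keq using False f_hi by simp
    qed
  qed
  thus ?thesis using D by blast
qed


lemma dom_char:
  assumes n: "1 \<le> n"
  shows "P \<in> A_set n - US_set n \<longleftrightarrow> (\<exists>f. P = part {1..n} f \<and> dom f n)"
proof
  assume P: "P \<in> A_set n - US_set n"
  hence pP: "partition_on {1..n} P" and at: "atomic n P" and sp: "splitable n P"
    unfolding A_set_def US_set_def by auto
  obtain f where f: "rgf {1..n} f" "P = part {1..n} f" using part_exists[OF _ pP] by auto
  have "dom f n"
  proof
    show "1 \<le> n" by (rule n)
    show "rgf {1..n} f" by (rule f(1))
    show "\<And>c. 1 \<le> c \<Longrightarrow> c < n \<Longrightarrow> \<not> cutp f n c" using at atomic_iff[OF n] f(2) by blast
    show "\<exists>i. 2 \<le> i \<and> i \<le> n \<and> rgf {i..n} f" using sp splitable_iff[OF f(1)] f(2) by blast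
  qed
  thus "\<exists>f. P = part {1..n} f \<and> dom f n" using f by blast
next
  assume "\<exists>f. P = part {1..n} f \<and> dom f n"
  then obtain f where P: "P = part {1..n} f" and D: "dom f n" by blast
  interpret D: dom f n by (rule D)
  have "atomic n P" unfolding P atomic_iff[OF n] using D.nocut by blast
  moreover have "splitable n P" unfolding P splitable_iff[OF D.rf] using D.exsp .
  ultimately show "P \<in> A_set n - US_set n" unfolding A_set_def US_set_def P
    using partition_part by blast
qed

lemma phi_in:
  assumes D: "dom f n"
  shows "phi n (part {1..n} f) \<in> US_set n - A_set n"
proof -
  interpret D: dom f n by (rule D)
  have "\<not> splitable n (part {1..n} (gf f n))"
    unfolding splitable_iff[OF D.g_rgf] using D.g_unsplit by blast
  moreover have "\<not> atomic n (part {1..n} (gf f n))"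
  proof -
    have "1 \<le> jf f n - 1" "jf f n - 1 < n" using D.j2 D.j_props(2) by auto
    thus ?thesis unfolding atomic_iff[OF D.n1] using D.g_cut by blast
  qed
  ultimately show ?thesis unfolding D.phi_eq A_set_def US_set_def using partition_part by blast
qed

theorem mainTheorem1:
  fixes n :: nat
  assumes "n \<ge> 1"
  shows "bij_betw (phi n) (A_set n - US_set n) (US_set n - A_set n)"
  unfolding bij_betw_def
proof (intro conjI)
  have n: "1 \<le> n" using assms by simp
  show "inj_on (phi n) (A_set n - US_set n)"
  proof (rule inj_onI)
    fix P1 P2 assume P1: "P1 \<in> A_set n - US_set n" and P2: "P2 \<in> A_set n - US_set n"
      and eq: "phi n P1 = phi n P2"
    obtain f1 where f1: "P1 = part {1..n} f1" "dom f1 n" using P1 dom_char[OF n] by blast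
    obtain f2 where f2: "P2 = part {1..n} f2" "dom f2 n" using P2 dom_char[OF n] by blast
    have "part {1..n} (gf f1 n) = part {1..n} (gf f2 n)"
      using eq f1 f2 dom.phi_eq[OF f1(2)] dom.phi_eq[OF f2(2)] by simp
    thus "P1 = P2" using dom_inj[OF f1(2) f2(2)] f1 f2 by simp
  qed
  show "phi n ` (A_set n - US_set n) = US_set n - A_set n"
  proof
    show "phi n ` (A_set n - US_set n) \<subseteq> US_set n - A_set n"
    proof
      fix Q assume "Q \<in> phi n ` (A_set n - US_set n)"
      then obtain P where P: "P \<in> A_set n - US_set n" "Q = phi n P" by blast
      obtain f where f: "P = part {1..n} f" "dom f n" using P(1) dom_char[OF n] by blast
      show "Q \<in> US_set n - A_set n" using phi_in[OF f(2)] P f by simp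
    qed
    show "US_set n - A_set n \<subseteq> phi n ` (A_set n - US_set n)"
    proof
      fix Q assume Q: "Q \<in> US_set n - A_set n"
      hence pQ: "partition_on {1..n} Q" and nat: "\<not> atomic n Q" and nsp: "\<not> splitable n Q"
        unfolding A_set_def US_set_def by auto
      obtain g where g: "rgf {1..n} g" "Q = part {1..n} g" using part_exists[OF _ pQ] by auto
      have ex: "\<exists>c. 1 \<le> c \<and> c < n \<and> cutp g n c" using nat atomic_iff[OF n] g(2) by blast
      have un: "\<And>b. 2 \<le> b \<Longrightarrow> b \<le> n \<Longrightarrow> \<not> rgf {b..n} g" using nsp splitable_iff[OF g(1)] g(2) by blast
      obtain f where f: "dom f n" "part {1..n} (gf f n) = part {1..n} g"
        using surj_ex[OF n g(1) ex un] by blast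
      have "part {1..n} f \<in> A_set n - US_set n" using dom_char[OF n] f(1) by blast
      moreover have "phi n (part {1..n} f) = Q" using dom.phi_eq[OF f(1)] f(2) g(2) by simp
      ultimately show "Q \<in> phi n ` (A_set n - US_set n)" by (metis image_eqI)
    qed
  qed
qed


end
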